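(* Let $\Bbbk$ be an algebraically closed field of characteristic zero, $G$ a finite group, $\chi:G\to\Bbbk^\times$ a linear character with $\chi^n=1$, $g\in Z(G)$ with $g^n\neq 1$, where $n\geq 2$ is the multiplicative order of $\chi(g)$. Let $H$ be the $\Bbbk$-algebra generated by $\Bbbk G$ and $z$ with relations $z^n=g^n-1$ and $zs=\chi(s)sz$ for $s\in G$. Then for every $j\in\Lambda_1$, the annihilator ideal in $H$ of the $H$-module $P_j$ is $$\Big(\sum_{i\in\Lambda_0}e_i+\sum_{j'\in\Lambda_1\setminus\mathbf{Orb}(j)}e_{j'}\Big).$$
   Context: Let $\chi_0,\dots,\chi_{p-1}$ be the irreducible characters of $G$, $V_i$ a simple $\Bbbk G$-module with character $\chi_i$, and $e_i=\frac{\chi_i(1)}{|G|}\sum_{h\in G}\chi_i(h)h^{-1}$. The central element $g^n$ acts on $V_i$ by a scalar $\lambda_i$; $\Lambda_0=\{i:\lambda_i=1\}$, $\Lambda_1=\{i:\lambda_i\neq 1\}$. The permutation $\tau$ of the indices is defined by $\chi^{-1}\chi_i=\chi_{\tau(i)}$, and $\mathbf{Orb}(j)=\{j,\tau(j),\dots,\tau^{n-1}(j)\}$. For $j\in\Lambda_1$, $P_j=V_j\oplus xV_j\oplus\cdots\oplus x^{n-1}V_j$ (formal copies of $V_j$) with $s\cdot(x^lv)=\chi^{-l}(s)x^l(s\cdot v)$ for $s\in G$, $z\cdot(x^lv)=x^{l+1}v$ for $0\leq l\leq n-2$, and $z\cdot(x^{n-1}v)=(\lambda_j-1)v$. $(a)$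 denotes the two-sided ideal of $H$ generated by $a$. *)

theory Defs
  imports "HOL-Algebra.Group" "HOL-Computational_Algebra.Polynomial" "Jordan_Normal_Form.Matrix" "HOL-Library.Function_Algebras"
begin

definition alg_closed_field :: "'k::field itself \<Rightarrow> bool" where
  "alg_closed_field _ \<longleftrightarrow> (\<forall>p :: 'k poly. degree p \<noteq> 0 \<longrightarrow> (\<exists>x. poly p x = 0))"

definition is_rep :: "('g, 'b) monoid_scheme \<Rightarrow> nat \<Rightarrow> ('g \<Rightarrow> 'k::field mat) \<Rightarrow> bool" where
  "is_rep G d \<rho> \<longleftrightarrow> (\<forall>s\<in>carrier G. \<rho> s \<in> carrier_mat d d) \<and> \<rho> \<one>\<^bsub>G\<^esub> = 1\<^sub>m d \<and>
     (\<forall>s\<in>carrier G. \<forall>t\<in>carrier G. \<rho> (s \<otimes>\<^bsub>G\<^esub> t) = \<rho> s * \<rho> t)"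

definition invariant_subspace :: "('g, 'b) monoid_scheme \<Rightarrow> nat \<Rightarrow> ('g \<Rightarrow> 'k::field mat) \<Rightarrow> 'k vec set \<Rightarrow> bool" where
  "invariant_subspace G d \<rho> W \<longleftrightarrow> W \<subseteq> carrier_vec d \<and> 0\<^sub>v d \<in> W \<and>
     (\<forall>v\<in>W. \<forall>w\<in>W. v + w \<in> W) \<and> (\<forall>c. \<forall>v\<in>W. c \<cdot>\<^sub>v v \<in> W) \<and>
     (\<forall>s\<in>carrier G. \<forall>v\<in>W. \<rho> s *\<^sub>v v \<in> W)"

definition irr_rep :: "('g, 'b) monoid_scheme \<Rightarrow> nat \<Rightarrow> ('g \<Rightarrow> 'k::field mat) \<Rightarrow> bool" where
  "irr_rep G d \<rho> \<longleftrightarrow> is_rep G d \<rho> \<and> d > 0 \<and>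
     (\<forall>W. invariant_subspace G d \<rho> W \<longrightarrow> W = {0\<^sub>v d} \<or> W = carrier_vec d)"

definition mat_trace :: "nat \<Rightarrow> 'k::field mat \<Rightarrow> 'k" where
  "mat_trace d A = (\<Sum>i<d. A $$ (i, i))"

definition char_of :: "('g, 'b) monoid_scheme \<Rightarrow> nat \<Rightarrow> ('g \<Rightarrow> 'k::field mat) \<Rightarrow> 'g \<Rightarrow> 'k" where
  "char_of G d \<rho> = (\<lambda>s. if s \<in> carrier G then mat_trace d (\<rho> s) else 0)"

definition Irr :: "('g, 'b) monoid_scheme \<Rightarrow> ('g \<Rightarrow> 'k::field) set" where
  "Irr G = {char_of G d \<rho> | d \<rho>. irr_rep G d \<rho>}"

(* the scalar by which the central element g^n acts *)
definition gn_scalar :: "('g, 'b) monoid_scheme \<Rightarrow> 'g \<Rightarrow> nat \<Rightarrow> nat \<Rightarrow> ('g \<Rightarrow> 'k::field mat) \<Rightarrow> 'k" where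
  "gn_scalar G g n d \<rho> = (THE c. \<rho> (g [^]\<^bsub>G\<^esub> n) = c \<cdot>\<^sub>m 1\<^sub>m d)"

definition Lambda0 :: "('g, 'b) monoid_scheme \<Rightarrow> 'g \<Rightarrow> nat \<Rightarrow> ('g \<Rightarrow> 'k::field) set" where
  "Lambda0 G g n = {\<psi> \<in> Irr G. \<exists>d \<rho>. irr_rep G d \<rho> \<and> char_of G d \<rho> = \<psi> \<and> gn_scalar G g n d \<rho> = 1}"

definition Lambda1 :: "('g, 'b) monoid_scheme \<Rightarrow> 'g \<Rightarrow> nat \<Rightarrow> ('g \<Rightarrow> 'k::field) set" where
  "Lambda1 G g n = {\<psi> \<in> Irr G. \<exists>d \<rho>. irr_rep G d \<rho> \<and> char_of G d \<rho> = \<psi> \<and> gn_scalar G g n d \<rho> \<noteq> 1}"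

definition Orb :: "('g \<Rightarrow> 'k::field) \<Rightarrow> nat \<Rightarrow> ('g \<Rightarrow> 'k) \<Rightarrow> ('g \<Rightarrow> 'k) set" where
  "Orb \<chi> n \<psi> = {(\<lambda>s. (inverse (\<chi> s)) ^ l * \<psi> s) | l. l < n}"

(* The algebra H, realised on its basis {s z^l : s in G, 0 <= l < n}:
   an element h is the coefficient function h s l of s z^l. *)
definition Hcar :: "('g, 'b) monoid_scheme \<Rightarrow> nat \<Rightarrow> ('g \<Rightarrow> nat \<Rightarrow> 'k::field) set" where
  "Hcar G n = {h. \<forall>s l. (s \<notin> carrier G \<or> n \<le> l) \<longrightarrow> h s l = 0}"

definition Hbasis :: "'g \<Rightarrow> nat \<Rightarrow> 'g \<Rightarrow> nat \<Rightarrow> 'k::field" where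
  "Hbasis s l = (\<lambda>u m. if u = s \<and> m = l then 1 else 0)"

(* (s z^a)(t z^b) = chi(t)^a s t z^(a+b), using z^n = g^n - 1 *)
definition Hbasis_prod :: "('g, 'b) monoid_scheme \<Rightarrow> ('g \<Rightarrow> 'k::field) \<Rightarrow> 'g \<Rightarrow> nat
     \<Rightarrow> 'g \<Rightarrow> nat \<Rightarrow> 'g \<Rightarrow> nat \<Rightarrow> 'g \<Rightarrow> nat \<Rightarrow> 'k" where
  "Hbasis_prod G \<chi> g n s a t b =
     (if a + b < n then (\<lambda>u m. \<chi> t ^ a * Hbasis (s \<otimes>\<^bsub>G\<^esub> t) (a + b) u m)
      else (\<lambda>u m. \<chi> t ^ a * (Hbasis (s \<otimes>\<^bsub>G\<^esub> t \<otimes>\<^bsub>G\<^esub> (g [^]\<^bsub>G\<^esub> n)) (a + b - n) u m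
                              - Hbasis (s \<otimes>\<^bsub>G\<^esub> t) (a + b - n) u m)))"

definition Hmul :: "('g, 'b) monoid_scheme \<Rightarrow> ('g \<Rightarrow> 'k::field) \<Rightarrow> 'g \<Rightarrow> nat
     \<Rightarrow> ('g \<Rightarrow> nat \<Rightarrow> 'k) \<Rightarrow> ('g \<Rightarrow> nat \<Rightarrow> 'k) \<Rightarrow> ('g \<Rightarrow> nat \<Rightarrow> 'k)" where
  "Hmul G \<chi> g n x y = (\<lambda>u m. \<Sum>s\<in>carrier G. \<Sum>a<n. \<Sum>t\<in>carrier G. \<Sum>b<n.
       x s a * y t b * Hbasis_prod G \<chi> g n s a t b u m)"

inductive_set ideal_gen :: "('g, 'b) monoid_scheme \<Rightarrow> ('g \<Rightarrow> 'k::field) \<Rightarrow> 'g \<Rightarrow> nat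
     \<Rightarrow> ('g \<Rightarrow> nat \<Rightarrow> 'k) \<Rightarrow> ('g \<Rightarrow> nat \<Rightarrow> 'k) set"
  for G \<chi> g n a where
    gen: "a \<in> ideal_gen G \<chi> g n a"
  | zero: "0 \<in> ideal_gen G \<chi> g n a"
  | add: "x \<in> ideal_gen G \<chi> g n a \<Longrightarrow> y \<in> ideal_gen G \<chi> g n a \<Longrightarrow> x + y \<in> ideal_gen G \<chi> g n a"
  | lmul: "h \<in> Hcar G n \<Longrightarrow> x \<in> ideal_gen G \<chi> g n a \<Longrightarrow> Hmul G \<chi> g n h x \<in> ideal_gen G \<chi> g n a"
  | rmul: "h \<in> Hcar G n \<Longrightarrow> x \<in> ideal_gen G \<chi> g n a \<Longrightarrow> Hmul G \<chi> g n x h \<in> ideal_gen G \<chi> g n a"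

definition e_idem :: "('g, 'b) monoid_scheme \<Rightarrow> ('g \<Rightarrow> 'k::field) \<Rightarrow> 'g \<Rightarrow> nat \<Rightarrow> 'k" where
  "e_idem G \<psi> = (\<lambda>s l. if s \<in> carrier G \<and> l = 0
       then \<psi> \<one>\<^bsub>G\<^esub> / of_nat (card (carrier G)) * \<psi> (inv\<^bsub>G\<^esub> s) else 0)"

(* The module P = V + xV + ... + x^{n-1}V with V = k^d; an element w has
   w l i = i-th coordinate of the x^l-component. *)
definition Pcar :: "nat \<Rightarrow> nat \<Rightarrow> (nat \<Rightarrow> nat \<Rightarrow> 'k::field) set" where
  "Pcar n d = {w. \<forall>l i. (n \<le> l \<or> d \<le> i) \<longrightarrow> w l i = 0}"

definition P_z_act :: "nat \<Rightarrow> nat \<Rightarrow> 'k::field \<Rightarrow> (nat \<Rightarrow> nat \<Rightarrow> 'k) \<Rightarrow> (nat \<Rightarrow> nat \<Rightarrow> 'k)" where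
  "P_z_act n d lam w = (\<lambda>l i. if i < d then
      (if l = 0 then (lam - 1) * w (n - 1) i else if l < n then w (l - 1) i else 0) else 0)"

definition P_g_act :: "('g \<Rightarrow> 'k::field) \<Rightarrow> nat \<Rightarrow> nat \<Rightarrow> ('g \<Rightarrow> 'k mat) \<Rightarrow> 'g
     \<Rightarrow> (nat \<Rightarrow> nat \<Rightarrow> 'k) \<Rightarrow> (nat \<Rightarrow> nat \<Rightarrow> 'k)" where
  "P_g_act \<chi> n d \<rho> s w = (\<lambda>l i. if l < n \<and> i < d then
      (inverse (\<chi> s)) ^ l * (\<Sum>k<d. \<rho> s $$ (i, k) * w l k) else 0)"

definition P_act :: "('g, 'b) monoid_scheme \<Rightarrow> ('g \<Rightarrow> 'k::field) \<Rightarrow> nat \<Rightarrow> nat \<Rightarrow> ('g \<Rightarrow> 'k mat)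
     \<Rightarrow> 'k \<Rightarrow> ('g \<Rightarrow> nat \<Rightarrow> 'k) \<Rightarrow> (nat \<Rightarrow> nat \<Rightarrow> 'k) \<Rightarrow> (nat \<Rightarrow> nat \<Rightarrow> 'k)" where
  "P_act G \<chi> n d \<rho> lam h w = (\<lambda>l i. \<Sum>s\<in>carrier G. \<Sum>m<n.
       h s m * P_g_act \<chi> n d \<rho> s ((P_z_act n d lam ^^ m) w) l i)"

definition annihilator :: "('g, 'b) monoid_scheme \<Rightarrow> ('g \<Rightarrow> 'k::field) \<Rightarrow> nat \<Rightarrow> nat \<Rightarrow> ('g \<Rightarrow> 'k mat)
     \<Rightarrow> 'k \<Rightarrow> ('g \<Rightarrow> nat \<Rightarrow> 'k) set" where
  "annihilator G \<chi> n d \<rho> lam = {h \<in> Hcar G n. \<forall>w \<in> Pcar n d. P_act G \<chi> n d \<rho> lam h w = 0}"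

end

theory Submission
  imports Defs "Jordan_Normal_Form.Char_Poly"
begin

lemma mat_mult_entry:
  assumes "A \<in> carrier_mat n m" "B \<in> carrier_mat m p" "i < n" "j < p"
  shows "(A * B) $$ (i, j) = (\<Sum>k<m. A $$ (i, k) * B $$ (k, j))"
  using assms by (auto simp: scalar_prod_def lessThan_atLeast0 intro!: sum.cong)

lemma mat_vec_entry:
  assumes "A \<in> carrier_mat n m" "v \<in> carrier_vec m" "i < n"
  shows "(A *\<^sub>v v) $ i = (\<Sum>k<m. A $$ (i, k) * v $ k)"
  using assms by (auto simp: scalar_prod_def lessThan_atLeast0 intro!: sum.cong)

lemma mat_eq_from_vec:
  fixes A :: "'a::semiring_1 mat"
  assumes A: "A \<in> carrier_mat n m" and B: "B \<in> carrier_mat n m"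
    and h: "\<And>v. v \<in> carrier_vec m \<Longrightarrow> A *\<^sub>v v = B *\<^sub>v v"
  shows "A = B"
proof (rule eq_matI)
  fix i j assume i: "i < dim_row B" and j: "j < dim_col B"
  have "(A *\<^sub>v unit_vec m j) $ i = (B *\<^sub>v unit_vec m j) $ i" using h[of "unit_vec m j"] by simp
  then show "A $$ (i, j) = B $$ (i, j)" using A B i j by simp
qed (use A B in auto)

lemma smult_one_mat_vec:
  fixes x :: "'a::comm_ring_1 vec"
  assumes "x \<in> carrier_vec d"
  shows "(c \<cdot>\<^sub>m 1\<^sub>m d) *\<^sub>v x = c \<cdot>\<^sub>v x"
proof (rule eq_vecI)
  fix i assume "i < dim_vec (c \<cdot>\<^sub>v x)"
  then have i: "i < d" using assms by auto
  have "((c \<cdot>\<^sub>m 1\<^sub>m d) *\<^sub>v x) $ i = (\<Sum>k<d. (c \<cdot>\<^sub>m 1\<^sub>m d) $$ (i, k) * x $ k)"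
    using assms i by (intro mat_vec_entry) auto
  also have "\<dots> = (\<Sum>k<d. (if k = i then c * x $ i else 0))"
    using i by (intro sum.cong) auto
  finally show "((c \<cdot>\<^sub>m 1\<^sub>m d) *\<^sub>v x) $ i = (c \<cdot>\<^sub>v x) $ i" using i assms by simp
qed (use assms in auto)

lemma zero_mat_mult_vec[simp]:
  fixes v :: "'a::semiring_0 vec"
  assumes "v \<in> carrier_vec m"
  shows "0\<^sub>m n m *\<^sub>v v = 0\<^sub>v n"
  using assms by (intro eq_vecI) (auto simp: scalar_prod_def)

lemma mat_trace_comm:
  assumes "A \<in> carrier_mat m k" "B \<in> carrier_mat k m"
  shows "mat_trace m (A * B) = mat_trace k (B * A)"
proof -
  have "mat_trace m (A * B) = (\<Sum>i<m. \<Sum>j<k. A $$ (i, j) * B $$ (j, i))"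
    unfolding mat_trace_def using assms by (intro sum.cong refl, subst mat_mult_entry) auto
  also have "\<dots> = (\<Sum>j<k. \<Sum>i<m. B $$ (j, i) * A $$ (i, j))"
    by (subst sum.swap) (simp add: mult.commute)
  also have "\<dots> = mat_trace k (B * A)"
    unfolding mat_trace_def using assms by (intro sum.cong refl, subst mat_mult_entry) auto
  finally show ?thesis .
qed

lemma schur1:
  fixes \<rho> :: "'g \<Rightarrow> 'k::field mat"
  assumes ac: "alg_closed_field TYPE('k)" and irr: "irr_rep G d \<rho>"
    and A: "A \<in> carrier_mat d d" and comm: "\<forall>s\<in>carrier G. A * \<rho> s = \<rho> s * A"
  shows "\<exists>c. A = c \<cdot>\<^sub>m 1\<^sub>m d"
proof -
  from irr have d0: "d > 0" and rep: "\<forall>s\<in>carrier G. \<rho> s \<in> carrier_mat d d"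
    and inv: "\<And>W. invariant_subspace G d \<rho> W \<Longrightarrow> W = {0\<^sub>v d} \<or> W = carrier_vec d"
    unfolding irr_rep_def is_rep_def by auto
  have "degree (char_poly A) = d" using degree_monic_char_poly[OF A] by auto
  with d0 ac obtain c where "poly (char_poly A) c = 0"
    unfolding alg_closed_field_def by force
  then have "eigenvalue A c" using eigenvalue_root_char_poly[OF A] by simp
  then obtain v where v: "v \<in> carrier_vec d" "v \<noteq> 0\<^sub>v d" "A *\<^sub>v v = c \<cdot>\<^sub>v v"
    unfolding eigenvalue_def eigenvector_def using A by auto
  let ?W = "{v \<in> carrier_vec d. A *\<^sub>v v = c \<cdot>\<^sub>v v}"
  have "invariant_subspace G d \<rho> ?W"
    unfolding invariant_subspace_def
  proof (intro conjI ballI allI)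
    show "?W \<subseteq> carrier_vec d" by auto
    show "0\<^sub>v d \<in> ?W" using A by auto
    fix x y assume x: "x \<in> ?W" and y: "y \<in> ?W"
    then show "x + y \<in> ?W" using A by (auto simp: mult_add_distrib_mat_vec smult_add_distrib_vec)
  next
    fix k x assume x: "x \<in> ?W"
    then show "k \<cdot>\<^sub>v x \<in> ?W" using A
      by (auto simp: mult_mat_vec smult_smult_assoc mult.commute)
  next
    fix s x assume s: "s \<in> carrier G" and x: "x \<in> ?W"
    have Rs: "\<rho> s \<in> carrier_mat d d" using rep s by auto
    have "A *\<^sub>v (\<rho> s *\<^sub>v x) = (A * \<rho> s) *\<^sub>v x" using A Rs x by auto
    also have "\<dots> = (\<rho> s * A) *\<^sub>v x" using comm s by simp
    also have "\<dots> = \<rho> s *\<^sub>v (c \<cdot>\<^sub>v x)" using A Rs x by auto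
    also have "\<dots> = c \<cdot>\<^sub>v (\<rho> s *\<^sub>v x)" using Rs x by (simp add: mult_mat_vec)
    finally show "\<rho> s *\<^sub>v x \<in> ?W" using Rs x by auto
  qed
  from inv[OF this] v have W: "?W = carrier_vec d" by auto
  have "A = c \<cdot>\<^sub>m 1\<^sub>m d"
  proof (rule mat_eq_from_vec[OF A])
    fix x :: "'k vec" assume "x \<in> carrier_vec d"
    then show "A *\<^sub>v x = (c \<cdot>\<^sub>m 1\<^sub>m d) *\<^sub>v x" using W smult_one_mat_vec[of x d c] by auto
  qed auto
  then show ?thesis by blast
qed

lemma schur2:
  fixes \<rho> \<rho>' :: "'g \<Rightarrow> 'k::field mat"
  assumes irr: "irr_rep G d \<rho>" and irr': "irr_rep G d' \<rho>'" and T: "T \<in> carrier_mat d' d"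
    and comm: "\<forall>s\<in>carrier G. \<rho>' s * T = T * \<rho> s" and Tnz: "T \<noteq> 0\<^sub>m d' d"
  shows "char_of G d \<rho> = char_of G d' \<rho>'"
proof -
  from irr have rep: "\<forall>s\<in>carrier G. \<rho> s \<in> carrier_mat d d"
    and inv: "\<And>W. invariant_subspace G d \<rho> W \<Longrightarrow> W = {0\<^sub>v d} \<or> W = carrier_vec d"
    unfolding irr_rep_def is_rep_def by auto
  from irr' have rep': "\<forall>s\<in>carrier G. \<rho>' s \<in> carrier_mat d' d'"
    and inv': "\<And>W. invariant_subspace G d' \<rho>' W \<Longrightarrow> W = {0\<^sub>v d'} \<or> W = carrier_vec d'"
    unfolding irr_rep_def is_rep_def by auto
  let ?K = "{v \<in> carrier_vec d. T *\<^sub>v v = 0\<^sub>v d'}"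
  have "invariant_subspace G d \<rho> ?K"
    unfolding invariant_subspace_def
  proof (intro conjI ballI allI)
    show "?K \<subseteq> carrier_vec d" by auto
    show "0\<^sub>v d \<in> ?K" using T by auto
    fix x y assume "x \<in> ?K" "y \<in> ?K"
    then show "x + y \<in> ?K" using T by (auto simp: mult_add_distrib_mat_vec)
  next
    fix k x assume "x \<in> ?K"
    then show "k \<cdot>\<^sub>v x \<in> ?K" using T by (auto simp: mult_mat_vec)
  next
    fix s x assume s: "s \<in> carrier G" and x: "x \<in> ?K"
    have Rs: "\<rho> s \<in> carrier_mat d d" "\<rho>' s \<in> carrier_mat d' d'" using rep rep' s by auto
    have "T *\<^sub>v (\<rho> s *\<^sub>v x) = (T * \<rho> s) *\<^sub>v x" using T Rs x by auto
    also have "\<dots> = (\<rho>' s * T) *\<^sub>v x" using comm s by simp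
    also have "\<dots> = 0\<^sub>v d'" using T Rs x by auto
    finally show "\<rho> s *\<^sub>v x \<in> ?K" using Rs x by auto
  qed
  from inv[OF this] have K: "?K = {0\<^sub>v d} \<or> ?K = carrier_vec d" .
  have "?K \<noteq> carrier_vec d"
  proof
    assume "?K = carrier_vec d"
    then have "T = 0\<^sub>m d' d" using T by (intro mat_eq_from_vec[OF T]) auto
    with Tnz show False by simp
  qed
  with K have K0: "?K = {0\<^sub>v d}" by simp
  let ?I = "{w. \<exists>v\<in>carrier_vec d. w = T *\<^sub>v v}"
  have "invariant_subspace G d' \<rho>' ?I"
    unfolding invariant_subspace_def
  proof (intro conjI ballI allI)
    show "?I \<subseteq> carrier_vec d'" using T by auto
    show "0\<^sub>v d' \<in> ?I" using T by (auto intro!: bexI[of _ "0\<^sub>v d"])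
    fix x y assume "x \<in> ?I" "y \<in> ?I"
    then obtain u v where "u \<in> carrier_vec d" "v \<in> carrier_vec d" "x = T *\<^sub>v u" "y = T *\<^sub>v v" by auto
    then show "x + y \<in> ?I" using T by (auto simp: mult_add_distrib_mat_vec intro!: bexI[of _ "u + v"])
  next
    fix k x assume "x \<in> ?I"
    then obtain u where "u \<in> carrier_vec d" "x = T *\<^sub>v u" by auto
    then show "k \<cdot>\<^sub>v x \<in> ?I" using T by (auto simp: mult_mat_vec intro!: bexI[of _ "k \<cdot>\<^sub>v u"])
  next
    fix s x assume s: "s \<in> carrier G" and x: "x \<in> ?I"
    then obtain u where u: "u \<in> carrier_vec d" "x = T *\<^sub>v u" by auto
    have Rs: "\<rho> s \<in> carrier_mat d d" "\<rho>' s \<in> carrier_mat d' d'" using rep rep' s by auto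
    have "\<rho>' s *\<^sub>v x = (\<rho>' s * T) *\<^sub>v u" using T Rs u by auto
    also have "\<dots> = (T * \<rho> s) *\<^sub>v u" using comm s by simp
    also have "\<dots> = T *\<^sub>v (\<rho> s *\<^sub>v u)" using T Rs u by auto
    finally show "\<rho>' s *\<^sub>v x \<in> ?I" using Rs u by auto
  qed
  from inv'[OF this] have I: "?I = {0\<^sub>v d'} \<or> ?I = carrier_vec d'" .
  have "?I \<noteq> {0\<^sub>v d'}"
  proof
    assume "?I = {0\<^sub>v d'}"
    then have "T = 0\<^sub>m d' d" using T by (intro mat_eq_from_vec[OF T]) auto
    with Tnz show False by simp
  qed
  with I have I1: "?I = carrier_vec d'" by simp
  define v where "v j = (SOME v. v \<in> carrier_vec d \<and> unit_vec d' j = T *\<^sub>v v)" for j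
  have v: "v j \<in> carrier_vec d \<and> unit_vec d' j = T *\<^sub>v v j" if "j < d'" for j
  proof -
    have "unit_vec d' j \<in> ?I" using I1 by auto
    then have "\<exists>v. v \<in> carrier_vec d \<and> unit_vec d' j = T *\<^sub>v v" by auto
    then show ?thesis unfolding v_def by (rule someI_ex)
  qed
  define S where "S = mat d d' (\<lambda>(i, j). v j $ i)"
  have S: "S \<in> carrier_mat d d'" unfolding S_def by auto
  have TS: "T * S = 1\<^sub>m d'"
  proof (rule eq_matI)
    fix i j assume i0: "i < dim_row (1\<^sub>m d')" and j0: "j < dim_col (1\<^sub>m d')"
    then have i: "i < d'" and j: "j < d'" by auto
    have "(T * S) $$ (i, j) = (\<Sum>k<d. T $$ (i, k) * S $$ (k, j))"
      using i j T S by (intro mat_mult_entry) auto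
    also have "\<dots> = (\<Sum>k<d. T $$ (i, k) * v j $ k)" unfolding S_def using j by (intro sum.cong) auto
    also have "\<dots> = (T *\<^sub>v v j) $ i" using v[of j] i j T by (subst mat_vec_entry) auto
    also have "\<dots> = unit_vec d' j $ i" using v[of j] j by metis
    also have "\<dots> = 1\<^sub>m d' $$ (i, j)" using i j by simp
    finally show "(T * S) $$ (i, j) = 1\<^sub>m d' $$ (i, j)" .
  qed (use T S in auto)
  have ST: "S * T = 1\<^sub>m d"
  proof (rule mat_eq_from_vec)
    fix x :: "'k vec" assume x: "x \<in> carrier_vec d"
    let ?u = "(S * T) *\<^sub>v x"
    have u: "?u \<in> carrier_vec d" using S T x by auto
    have "T *\<^sub>v ?u = T *\<^sub>v (S *\<^sub>v (T *\<^sub>v x))" using S T x by simp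
    also have "\<dots> = (T * S) *\<^sub>v (T *\<^sub>v x)" using S T x by simp
    also have "\<dots> = T *\<^sub>v x" using TS T x by auto
    finally have "T *\<^sub>v (?u - x) = 0\<^sub>v d'" using T u x by (simp add: mult_minus_distrib_mat_vec)
    then have "?u - x \<in> ?K" using u x by auto
    then have "?u - x = 0\<^sub>v d" using K0 by auto
    then have "?u = x" using u x
    proof (intro eq_vecI)
      fix i assume "?u - x = 0\<^sub>v d" "i < dim_vec x"
      then have "(?u - x) $ i = 0" using x by simp
      then show "?u $ i = x $ i" using u x \<open>i < dim_vec x\<close> by simp
    qed (use S in auto)
    then show "(S * T) *\<^sub>v x = 1\<^sub>m d *\<^sub>v x" using x by simp
  qed (use S T in auto)
  show ?thesis
  proof
    fix s
    show "char_of G d \<rho> s = char_of G d' \<rho>' s"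
    proof (cases "s \<in> carrier G")
      case True
      have Rs: "\<rho> s \<in> carrier_mat d d" "\<rho>' s \<in> carrier_mat d' d'" using rep rep' True by auto
      have "\<rho>' s = \<rho>' s * (T * S)" using TS Rs by simp
      also have "\<dots> = (\<rho>' s * T) * S" using Rs T S by (simp add: assoc_mult_mat)
      finally have "mat_trace d' (\<rho>' s) = mat_trace d' ((\<rho>' s * T) * S)" by simp
      also have "\<dots> = mat_trace d' (T * (\<rho> s * S))" using comm True Rs T S by (simp add: assoc_mult_mat)
      also have "\<dots> = mat_trace d ((\<rho> s * S) * T)" using Rs T S by (intro mat_trace_comm) auto
      also have "(\<rho> s * S) * T = \<rho> s * (S * T)" using Rs T S by (simp add: assoc_mult_mat)
      also have "\<dots> = \<rho> s" using ST Rs by simp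
      finally show ?thesis unfolding char_of_def using True by simp
    qed (simp add: char_of_def)
  qed
qed

definition is_subsp :: "nat \<Rightarrow> 'k::field vec set \<Rightarrow> bool" where
  "is_subsp n U \<longleftrightarrow> U \<subseteq> carrier_vec n \<and> 0\<^sub>v n \<in> U \<and>
     (\<forall>v\<in>U. \<forall>w\<in>U. v + w \<in> U) \<and> (\<forall>c. \<forall>v\<in>U. c \<cdot>\<^sub>v v \<in> U)"

definition inj_mat :: "nat \<Rightarrow> nat \<Rightarrow> 'k::field mat \<Rightarrow> bool" where
  "inj_mat n k B \<longleftrightarrow> B \<in> carrier_mat n k \<and> (\<forall>c\<in>carrier_vec k. B *\<^sub>v c = 0\<^sub>v n \<longrightarrow> c = 0\<^sub>v k)"

lemma basis_lemma:
  fixes U :: "'k::field vec set"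
  assumes "is_subsp n U"
  shows "\<exists>k B. k \<le> n \<and> inj_mat n k B \<and> U = {B *\<^sub>v c | c. c \<in> carrier_vec k}"
  using assms
proof (induction n arbitrary: U)
  case 0
  have cv0: "carrier_vec 0 = {0\<^sub>v 0 :: 'k vec}" by (auto intro!: eq_vecI)
  with 0 have U: "U = carrier_vec 0" unfolding is_subsp_def by auto
  show ?case
  proof (intro exI conjI)
    show "inj_mat 0 0 (0\<^sub>m 0 0 :: 'k mat)" unfolding inj_mat_def by (auto intro: eq_vecI)
    show "U = {(0\<^sub>m 0 0 :: 'k mat) *\<^sub>v c | c. c \<in> carrier_vec 0}"
      unfolding U by (auto intro!: exI[of _ "0\<^sub>v 0"] eq_vecI)
  qed auto
next
  case (Suc n)
  note S = Suc.prems[unfolded is_subsp_def]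
  define tr where "tr v = vec n (\<lambda>i. v $ i)" for v :: "'k vec"
  define U0 where "U0 = {tr u | u. u \<in> U \<and> u $ n = 0}"
  have "is_subsp n U0"
    unfolding is_subsp_def
  proof (intro conjI ballI allI)
    show "U0 \<subseteq> carrier_vec n" unfolding U0_def tr_def by auto
    show "0\<^sub>v n \<in> U0" unfolding U0_def tr_def using S
      by (auto intro!: exI[of _ "0\<^sub>v (Suc n)"] eq_vecI)
    fix v w assume "v \<in> U0" "w \<in> U0"
    then obtain v' w' where "v' \<in> U" "v' $ n = 0" "v = tr v'" "w' \<in> U" "w' $ n = 0" "w = tr w'"
      unfolding U0_def by auto
    then show "v + w \<in> U0" unfolding U0_def tr_def using S
      by (auto intro!: exI[of _ "v' + w'"] eq_vecI)
  next
    fix c v assume "v \<in> U0"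
    then obtain v' where "v' \<in> U" "v' $ n = 0" "v = tr v'" unfolding U0_def by auto
    then show "c \<cdot>\<^sub>v v \<in> U0" unfolding U0_def tr_def using S
      by (auto intro!: exI[of _ "c \<cdot>\<^sub>v v'"] eq_vecI)
  qed
  from Suc.IH[OF this] obtain k0 B0 where k0: "k0 \<le> n" and B0: "inj_mat n k0 B0"
    and U0: "U0 = {B0 *\<^sub>v c | c. c \<in> carrier_vec k0}" by auto
  have B0c: "B0 \<in> carrier_mat n k0" using B0 unfolding inj_mat_def by auto
  define ext where "ext v = vec (Suc n) (\<lambda>i. if i < n then v $ i else 0)" for v :: "'k vec"
  have ext_in: "ext (B0 *\<^sub>v c) \<in> U" if c: "c \<in> carrier_vec k0" for c
  proof -
    have "B0 *\<^sub>v c \<in> U0" using U0 c by auto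
    then obtain u where u: "u \<in> U" "u $ n = 0" "B0 *\<^sub>v c = tr u" unfolding U0_def by auto
    have "ext (B0 *\<^sub>v c) = u" unfolding u(3) ext_def tr_def
      using u S by (intro eq_vecI) (auto simp: less_Suc_eq)
    then show ?thesis using u by simp
  qed
  show ?case
  proof (cases "\<forall>u\<in>U. u $ n = 0")
    case True
    define B where "B = mat (Suc n) k0 (\<lambda>(i, j). if i < n then B0 $$ (i, j) else 0)"
    have Bc: "B *\<^sub>v c = ext (B0 *\<^sub>v c)" if "c \<in> carrier_vec k0" for c
      unfolding B_def ext_def using that B0c
      by (intro eq_vecI) (auto simp: row_def scalar_prod_def)
    show ?thesis
    proof (intro exI conjI)
      show "k0 \<le> Suc n" using k0 by simp
      show "inj_mat (Suc n) k0 B" unfolding inj_mat_def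
      proof (intro conjI ballI impI)
        show "B \<in> carrier_mat (Suc n) k0" unfolding B_def by simp
        fix c :: "'k vec" assume c: "c \<in> carrier_vec k0" and z: "B *\<^sub>v c = 0\<^sub>v (Suc n)"
        have "B0 *\<^sub>v c = 0\<^sub>v n"
        proof (intro eq_vecI)
          fix i assume "i < dim_vec (0\<^sub>v n :: 'k vec)"
          then have i: "i < n" by simp
          have "ext (B0 *\<^sub>v c) $ i = 0" using z Bc[OF c] i by simp
          then show "(B0 *\<^sub>v c) $ i = 0\<^sub>v n $ i" using i unfolding ext_def by simp
        qed (use B0c in auto)
        then show "c = 0\<^sub>v k0" using B0 c unfolding inj_mat_def by auto
      qed
      show "U = {B *\<^sub>v c | c. c \<in> carrier_vec k0}"
      proof (intro equalityI subsetI)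
        fix u assume u: "u \<in> U"
        then have "tr u \<in> U0" using True unfolding U0_def by auto
        then obtain c where c: "c \<in> carrier_vec k0" "tr u = B0 *\<^sub>v c" using U0 by auto
        have "u = ext (tr u)" unfolding ext_def tr_def using u S True
          by (intro eq_vecI) (auto simp: less_Suc_eq)
        then have "u = B *\<^sub>v c" using c Bc[OF c(1)] by simp
        then show "u \<in> {B *\<^sub>v c | c. c \<in> carrier_vec k0}" using c(1) by blast
      next
        fix u assume "u \<in> {B *\<^sub>v c | c. c \<in> carrier_vec k0}"
        then show "u \<in> U" using Bc ext_in by auto
      qed
    qed
  next
    case False
    then obtain u1 where u1: "u1 \<in> U" "u1 $ n \<noteq> 0" by auto
    define u0 where "u0 = (1 / u1 $ n) \<cdot>\<^sub>v u1"
    have u0: "u0 \<in> U" "u0 $ n = 1" "u0 \<in> carrier_vec (Suc n)"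
      using u1 S unfolding u0_def by auto
    define B where "B = mat (Suc n) (Suc k0) (\<lambda>(i, j). if j < k0 then (if i < n then B0 $$ (i, j) else 0) else u0 $ i)"
    define ct where "ct c = vec k0 (\<lambda>j. c $ j)" for c :: "'k vec"
    have Bc: "B *\<^sub>v c = ext (B0 *\<^sub>v ct c) + (c $ k0) \<cdot>\<^sub>v u0" if c: "c \<in> carrier_vec (Suc k0)" for c
    proof (intro eq_vecI)
      fix i assume "i < dim_vec (ext (B0 *\<^sub>v ct c) + (c $ k0) \<cdot>\<^sub>v u0)"
      then have i: "i < Suc n" using u0 unfolding ext_def by simp
      have "(B *\<^sub>v c) $ i = (\<Sum>j<Suc k0. B $$ (i, j) * c $ j)"
        using i c by (intro mat_vec_entry) (auto simp: B_def)
      also have "\<dots> = (\<Sum>j<k0. B $$ (i, j) * c $ j) + u0 $ i * c $ k0"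
        using i by (simp add: B_def)
      also have "(\<Sum>j<k0. B $$ (i, j) * c $ j) = (if i < n then (B0 *\<^sub>v ct c) $ i else 0)"
        using i B0c c by (auto simp: B_def ct_def scalar_prod_def lessThan_atLeast0 intro!: sum.cong)
      finally show "(B *\<^sub>v c) $ i = (ext (B0 *\<^sub>v ct c) + (c $ k0) \<cdot>\<^sub>v u0) $ i"
        using i u0 by (simp add: ext_def mult.commute)
    qed (use u0 in \<open>auto simp: B_def ext_def\<close>)
    show ?thesis
    proof (intro exI conjI)
      show "Suc k0 \<le> Suc n" using k0 by simp
      show "inj_mat (Suc n) (Suc k0) B" unfolding inj_mat_def
      proof (intro conjI ballI impI)
        show "B \<in> carrier_mat (Suc n) (Suc k0)" unfolding B_def by simp
        fix c :: "'k vec" assume c: "c \<in> carrier_vec (Suc k0)" and z: "B *\<^sub>v c = 0\<^sub>v (Suc n)"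
        have "(B *\<^sub>v c) $ n = 0" using z by simp
        then have cl: "c $ k0 = 0" using Bc[OF c] u0 by (simp add: ext_def)
        have "B0 *\<^sub>v ct c = 0\<^sub>v n"
        proof (intro eq_vecI)
          fix i assume "i < dim_vec (0\<^sub>v n :: 'k vec)"
          then have i: "i < n" by simp
          have "(B *\<^sub>v c) $ i = 0" using z i by simp
          then show "(B0 *\<^sub>v ct c) $ i = 0\<^sub>v n $ i" using i Bc[OF c] cl u0 unfolding ext_def by simp
        qed (use B0c in auto)
        then have ct0: "ct c = 0\<^sub>v k0" using B0 unfolding inj_mat_def ct_def by auto
        show "c = 0\<^sub>v (Suc k0)"
        proof (intro eq_vecI)
          fix i assume "i < dim_vec (0\<^sub>v (Suc k0) :: 'k vec)"
          then have "i < k0 \<or> i = k0" by auto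
          then show "c $ i = 0\<^sub>v (Suc k0) $ i"
          proof
            assume i: "i < k0"
            have "ct c $ i = 0" using ct0 i by simp
            then show ?thesis using i by (simp add: ct_def)
          qed (use cl in simp)
        qed (use c in simp)
      qed
      show "U = {B *\<^sub>v c | c. c \<in> carrier_vec (Suc k0)}"
      proof (intro equalityI subsetI)
        fix u assume u: "u \<in> U"
        define w where "w = u + (- (u $ n)) \<cdot>\<^sub>v u0"
        have uc: "u \<in> carrier_vec (Suc n)" using u S by auto
        have w: "w \<in> U" "w $ n = 0" unfolding w_def using S u u0 by auto
        then have "tr w \<in> U0" unfolding U0_def by auto
        then obtain c' where c': "c' \<in> carrier_vec k0" "tr w = B0 *\<^sub>v c'" using U0 by auto
        define c where "c = vec (Suc k0) (\<lambda>j. if j < k0 then c' $ j else u $ n)"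
        have c: "c \<in> carrier_vec (Suc k0)" "ct c = c'" "c $ k0 = u $ n"
          unfolding c_def ct_def using c' by auto
        have "B *\<^sub>v c = ext (tr w) + (u $ n) \<cdot>\<^sub>v u0" using Bc[OF c(1)] c c' by simp
        also have "\<dots> = u" unfolding ext_def tr_def w_def using uc u0
          by (intro eq_vecI) (auto simp: less_Suc_eq)
        finally show "u \<in> {B *\<^sub>v c | c. c \<in> carrier_vec (Suc k0)}" using c by blast
      next
        fix u assume "u \<in> {B *\<^sub>v c | c. c \<in> carrier_vec (Suc k0)}"
        then obtain c where c: "c \<in> carrier_vec (Suc k0)" "u = B *\<^sub>v c" by auto
        have "ct c \<in> carrier_vec k0" unfolding ct_def by simp
        then show "u \<in> U" using c Bc ext_in u0 S by auto
      qed
    qed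
  qed
qed

lemma inj_square_surj:
  fixes B :: "'k::field mat"
  assumes B: "inj_mat n n B" and v: "v \<in> carrier_vec n"
  shows "\<exists>c\<in>carrier_vec n. B *\<^sub>v c = v"
proof -
  have Bc: "B \<in> carrier_mat n n" using B unfolding inj_mat_def by auto
  have "det B \<noteq> 0" using B det_0_iff_vec_prod_zero_field[OF Bc] unfolding inj_mat_def by auto
  let ?c = "(1 / det B) \<cdot>\<^sub>v (adj_mat B *\<^sub>v v)"
  have adj: "adj_mat B \<in> carrier_mat n n" "B * adj_mat B = det B \<cdot>\<^sub>m 1\<^sub>m n" using adj_mat[OF Bc] by auto
  have "B *\<^sub>v (adj_mat B *\<^sub>v v) = (B * adj_mat B) *\<^sub>v v"
    by (rule assoc_mult_mat_vec[OF Bc adj(1) v, symmetric])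
  also have "\<dots> = det B \<cdot>\<^sub>v v" unfolding adj(2) using v by (rule smult_one_mat_vec)
  finally have e: "B *\<^sub>v (adj_mat B *\<^sub>v v) = det B \<cdot>\<^sub>v v" .
  have "B *\<^sub>v ?c = (1 / det B) \<cdot>\<^sub>v (B *\<^sub>v (adj_mat B *\<^sub>v v))"
    using Bc adj v by (simp add: mult_mat_vec)
  also have "\<dots> = (1 / det B) \<cdot>\<^sub>v (det B \<cdot>\<^sub>v v)" using e by simp
  also have "\<dots> = v" using \<open>det B \<noteq> 0\<close> by (simp add: smult_smult_assoc)
  finally show ?thesis using adj v by (intro bexI[of _ ?c]) auto
qed

lemma inj_mat_le:
  fixes B :: "'k::field mat"
  assumes B: "inj_mat n m B"
  shows "m \<le> n"
proof (rule ccontr)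
  assume "\<not> m \<le> n"
  then have mn: "n < m" by simp
  have Bc: "B \<in> carrier_mat n m" using B unfolding inj_mat_def by auto
  define A where "A = mat m m (\<lambda>(i, j). if i < n then B $$ (i, j) else 0)"
  have Ac: "A \<in> carrier_mat m m" unfolding A_def by simp
  have "det A \<noteq> 0"
  proof
    assume "det A = 0"
    then obtain c where c: "c \<in> carrier_vec m" "c \<noteq> 0\<^sub>v m" "A *\<^sub>v c = 0\<^sub>v m"
      using det_0_iff_vec_prod_zero_field[OF Ac] by auto
    have "B *\<^sub>v c = 0\<^sub>v n"
    proof (intro eq_vecI)
      fix i assume "i < dim_vec (0\<^sub>v n :: 'k vec)"
      then have i: "i < n" by simp
      have "(A *\<^sub>v c) $ i = 0" using c i mn by simp
      then show "(B *\<^sub>v c) $ i = 0\<^sub>v n $ i" using i mn c Bc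
        by (simp add: A_def row_def scalar_prod_def)
    qed (use Bc in simp)
    with B c show False unfolding inj_mat_def by auto
  qed
  have adj: "adj_mat A \<in> carrier_mat m m" "A * adj_mat A = det A \<cdot>\<^sub>m 1\<^sub>m m" using adj_mat[OF Ac] by auto
  have "(A * adj_mat A) $$ (m - 1, m - 1) = (\<Sum>k<m. A $$ (m - 1, k) * adj_mat A $$ (k, m - 1))"
    using mn by (intro mat_mult_entry[OF Ac adj(1)]) auto
  also have "\<dots> = 0" using mn by (intro sum.neutral) (auto simp: A_def)
  finally have "det A = 0" using adj mn by simp
  with \<open>det A \<noteq> 0\<close> show False by simp
qed

lemma mat_eq_from_unit:
  fixes A :: "'a::semiring_1 mat"
  assumes A: "A \<in> carrier_mat n m" and B: "B \<in> carrier_mat n m"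
    and h: "\<And>j. j < m \<Longrightarrow> A *\<^sub>v unit_vec m j = B *\<^sub>v unit_vec m j"
  shows "A = B"
proof (rule eq_matI)
  fix i j assume i: "i < dim_row B" and j: "j < dim_col B"
  have "(A *\<^sub>v unit_vec m j) $ i = (B *\<^sub>v unit_vec m j) $ i" using h[of j] j B by simp
  then show "A $$ (i, j) = B $$ (i, j)" using A B i j by simp
qed (use A B in auto)

lemma inj_mat_cancel:
  fixes B :: "'k::field mat"
  assumes B: "inj_mat n k B" and x: "x \<in> carrier_vec k" and y: "y \<in> carrier_vec k"
    and e: "B *\<^sub>v x = B *\<^sub>v y"
  shows "x = y"
proof -
  have Bc: "B \<in> carrier_mat n k" using B unfolding inj_mat_def by auto
  have "B *\<^sub>v (x - y) = 0\<^sub>v n" using Bc x y e by (simp add: mult_minus_distrib_mat_vec)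
  then have "x - y = 0\<^sub>v k" using B x y unfolding inj_mat_def by auto
  then show "x = y" using x y
  proof (intro eq_vecI)
    fix i assume "x - y = 0\<^sub>v k" "i < dim_vec y"
    then have "(x - y) $ i = 0" using y by simp
    then show "x $ i = y $ i" using x y \<open>i < dim_vec y\<close> by simp
  qed auto
qed

definition repa :: "('g, 'b) monoid_scheme \<Rightarrow> nat \<Rightarrow> ('g \<Rightarrow> 'k::field mat) \<Rightarrow> ('g \<Rightarrow> 'k) \<Rightarrow> 'k mat" where
  "repa G d \<rho> a = mat d d (\<lambda>(i, j). \<Sum>s\<in>carrier G. a s * \<rho> s $$ (i, j))"

definition conv :: "('g, 'b) monoid_scheme \<Rightarrow> ('g \<Rightarrow> 'k::field) \<Rightarrow> ('g \<Rightarrow> 'k) \<Rightarrow> 'g \<Rightarrow> 'k" where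
  "conv G a b = (\<lambda>u. \<Sum>s\<in>carrier G. a s * b (inv\<^bsub>G\<^esub> s \<otimes>\<^bsub>G\<^esub> u))"

definition classf :: "('g, 'b) monoid_scheme \<Rightarrow> ('g \<Rightarrow> 'k) \<Rightarrow> bool" where
  "classf G a \<longleftrightarrow> (\<forall>s\<in>carrier G. \<forall>t\<in>carrier G. a (t \<otimes>\<^bsub>G\<^esub> s \<otimes>\<^bsub>G\<^esub> inv\<^bsub>G\<^esub> t) = a s)"

definition eG :: "('g, 'b) monoid_scheme \<Rightarrow> ('g \<Rightarrow> 'k::field) \<Rightarrow> 'g \<Rightarrow> 'k" where
  "eG G \<psi> = (\<lambda>s. \<psi> \<one>\<^bsub>G\<^esub> / of_nat (card (carrier G)) * \<psi> (inv\<^bsub>G\<^esub> s))"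

definition orthT :: "('g, 'b) monoid_scheme \<Rightarrow> nat \<Rightarrow> nat \<Rightarrow> ('g \<Rightarrow> 'k::field mat) \<Rightarrow> ('g \<Rightarrow> 'k mat) \<Rightarrow> nat \<Rightarrow> nat \<Rightarrow> 'k mat" where
  "orthT G d d' \<rho> \<rho>' a b = mat d' d (\<lambda>(i, j). \<Sum>s\<in>carrier G. \<rho>' s $$ (i, a) * \<rho> (inv\<^bsub>G\<^esub> s) $$ (b, j))"

context group
begin

lemma sum_lmult_reindex:
  assumes t: "t \<in> carrier G"
  shows "(\<Sum>s\<in>carrier G. f (t \<otimes> s)) = (\<Sum>s\<in>carrier G. f s)"
  by (rule sum.reindex_bij_witness[where i="\<lambda>s. inv t \<otimes> s" and j="\<lambda>s. t \<otimes> s"])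
     (use t in \<open>auto simp: m_assoc[symmetric]\<close>)

lemma sum_rmult_reindex:
  assumes t: "t \<in> carrier G"
  shows "(\<Sum>s\<in>carrier G. f (s \<otimes> t)) = (\<Sum>s\<in>carrier G. f s)"
  by (rule sum.reindex_bij_witness[where i="\<lambda>s. s \<otimes> inv t" and j="\<lambda>s. s \<otimes> t"])
     (use t in \<open>auto simp: m_assoc\<close>)

lemma sum_inv_reindex:
  "(\<Sum>s\<in>carrier G. f (inv s)) = (\<Sum>s\<in>carrier G. f s)"
  by (rule sum.reindex_bij_witness[where i="\<lambda>s. inv s" and j="\<lambda>s. inv s"]) auto

lemma rep_carrier: "is_rep G d \<rho> \<Longrightarrow> s \<in> carrier G \<Longrightarrow> \<rho> s \<in> carrier_mat d d"
  unfolding is_rep_def by auto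

lemma rep_mult: "is_rep G d \<rho> \<Longrightarrow> s \<in> carrier G \<Longrightarrow> t \<in> carrier G \<Longrightarrow> \<rho> (s \<otimes> t) = \<rho> s * \<rho> t"
  unfolding is_rep_def by auto

lemma rep_one: "is_rep G d \<rho> \<Longrightarrow> \<rho> \<one> = 1\<^sub>m d"
  unfolding is_rep_def by auto

lemma rep_mult_entry:
  assumes "is_rep G d \<rho>" "s \<in> carrier G" "t \<in> carrier G" "i < d" "j < d"
  shows "\<rho> (s \<otimes> t) $$ (i, j) = (\<Sum>k<d. \<rho> s $$ (i, k) * \<rho> t $$ (k, j))"
  using assms by (simp add: rep_mult mat_mult_entry[OF rep_carrier rep_carrier])

lemma rep_inv_mult: "is_rep G d \<rho> \<Longrightarrow> s \<in> carrier G \<Longrightarrow> \<rho> (inv s) * \<rho> s = 1\<^sub>m d"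
  by (metis inv_closed l_inv rep_mult rep_one)

lemma intertw:
  fixes \<rho> \<rho>' :: "'a \<Rightarrow> 'k::field mat"
  assumes rep: "is_rep G d \<rho>" and rep': "is_rep G d' \<rho>'" and t: "t \<in> carrier G"
  assumes a: "a < d'" and b: "b < d"
  shows "\<rho>' t * orthT G d d' \<rho> \<rho>' a b = orthT G d d' \<rho> \<rho>' a b * \<rho> t" (is "_ * ?T = _")
proof (rule eq_matI)
  have Rt: "\<rho> t \<in> carrier_mat d d" "\<rho>' t \<in> carrier_mat d' d'" using rep rep' t by (auto simp: rep_carrier)
  define T where "T = ?T"
  have T: "T \<in> carrier_mat d' d" unfolding T_def orthT_def by auto
  fix i j assume "i < dim_row (?T * \<rho> t)" "j < dim_col (?T * \<rho> t)"
  then have i: "i < d'" and j: "j < d" using T Rt by (auto simp: T_def)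
  have "(\<rho>' t * T) $$ (i, j) = (\<Sum>k<d'. \<rho>' t $$ (i, k) * T $$ (k, j))"
    by (rule mat_mult_entry[OF Rt(2) T i j])
  also have "\<dots> = (\<Sum>k<d'. \<Sum>s\<in>carrier G. \<rho>' t $$ (i, k) * (\<rho>' s $$ (k, a) * \<rho> (inv s) $$ (b, j)))"
    unfolding T_def orthT_def using j by (intro sum.cong refl) (auto simp: sum_distrib_left)
  also have "\<dots> = (\<Sum>s\<in>carrier G. (\<Sum>k<d'. \<rho>' t $$ (i, k) * \<rho>' s $$ (k, a)) * \<rho> (inv s) $$ (b, j))"
    by (subst sum.swap) (simp add: sum_distrib_right mult.assoc)
  also have "\<dots> = (\<Sum>s\<in>carrier G. \<rho>' (t \<otimes> s) $$ (i, a) * \<rho> (inv s) $$ (b, j))"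
    using rep' t i a by (intro sum.cong refl) (simp add: rep_mult_entry)
  also have "\<dots> = (\<Sum>s\<in>carrier G. \<rho>' (t \<otimes> (inv t \<otimes> s)) $$ (i, a) * \<rho> (inv (inv t \<otimes> s)) $$ (b, j))"
    using sum_lmult_reindex[OF inv_closed[OF t], of "\<lambda>s. \<rho>' (t \<otimes> s) $$ (i, a) * \<rho> (inv s) $$ (b, j)"]
    by simp
  also have "\<dots> = (\<Sum>s\<in>carrier G. \<rho>' s $$ (i, a) * \<rho> (inv s \<otimes> t) $$ (b, j))"
    using t by (intro sum.cong refl) (simp add: m_assoc[symmetric] inv_mult_group)
  also have "\<dots> = (\<Sum>s\<in>carrier G. \<Sum>k<d. \<rho>' s $$ (i, a) * (\<rho> (inv s) $$ (b, k) * \<rho> t $$ (k, j)))"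
    using rep t b j by (intro sum.cong refl) (simp add: rep_mult_entry sum_distrib_left)
  also have "\<dots> = (\<Sum>k<d. T $$ (i, k) * \<rho> t $$ (k, j))"
    unfolding T_def orthT_def using i by (subst sum.swap) (auto simp: sum_distrib_right mult.assoc intro!: sum.cong)
  also have "\<dots> = (T * \<rho> t) $$ (i, j)"
    by (rule mat_mult_entry[OF T Rt(1) i j, symmetric])
  finally show "(\<rho>' t * ?T) $$ (i, j) = (?T * \<rho> t) $$ (i, j)" unfolding T_def .
qed (insert rep_carrier[OF rep t] rep_carrier[OF rep' t], auto simp: orthT_def)

lemma orth_diff:
  fixes \<rho> \<rho>' :: "'a \<Rightarrow> 'k::field mat"
  assumes irr: "irr_rep G d \<rho>" and irr': "irr_rep G d' \<rho>'" and ne: "char_of G d \<rho> \<noteq> char_of G d' \<rho>'"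
    and i: "i < d'" and a: "a < d'" and b: "b < d" and j: "j < d"
  shows "(\<Sum>s\<in>carrier G. \<rho>' s $$ (i, a) * \<rho> (inv s) $$ (b, j)) = 0"
proof -
  have rep: "is_rep G d \<rho>" "is_rep G d' \<rho>'" using irr irr' unfolding irr_rep_def by auto
  have "orthT G d d' \<rho> \<rho>' a b = 0\<^sub>m d' d"
  proof (rule ccontr)
    assume "orthT G d d' \<rho> \<rho>' a b \<noteq> 0\<^sub>m d' d"
    from schur2[OF irr irr' _ _ this] intertw[OF rep _ a b] ne show False
      by (auto simp: orthT_def)
  qed
  then have "orthT G d d' \<rho> \<rho>' a b $$ (i, j) = 0" using i j by simp
  then show ?thesis using i j by (simp add: orthT_def)
qed

lemma orth_same:
  fixes \<rho> :: "'a \<Rightarrow> 'k::field_char_0 mat"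
  assumes ac: "alg_closed_field TYPE('k)" and irr: "irr_rep G d \<rho>"
    and i: "i < d" and a: "a < d" and b: "b < d" and j: "j < d"
  shows "(\<Sum>s\<in>carrier G. \<rho> s $$ (i, a) * \<rho> (inv s) $$ (b, j)) =
    (if i = j \<and> a = b then of_nat (card (carrier G)) / of_nat d else 0)"
proof -
  have rep: "is_rep G d \<rho>" and d0: "d > 0" using irr unfolding irr_rep_def by auto
  define T where "T = orthT G d d \<rho> \<rho> a b"
  have T: "T \<in> carrier_mat d d" unfolding T_def orthT_def by auto
  have "\<forall>s\<in>carrier G. T * \<rho> s = \<rho> s * T"
    using intertw[OF rep rep _ a b] unfolding T_def by auto
  from schur1[OF ac irr T this] obtain c where c: "T = c \<cdot>\<^sub>m 1\<^sub>m d" by auto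
  have "mat_trace d T = (\<Sum>k<d. \<Sum>s\<in>carrier G. \<rho> s $$ (k, a) * \<rho> (inv s) $$ (b, k))"
    unfolding mat_trace_def T_def orthT_def by simp
  also have "\<dots> = (\<Sum>s\<in>carrier G. \<Sum>k<d. \<rho> (inv s) $$ (b, k) * \<rho> s $$ (k, a))"
    by (subst sum.swap) (simp add: mult.commute)
  also have "\<dots> = (\<Sum>s\<in>carrier G. (\<rho> (inv s) * \<rho> s) $$ (b, a))"
    using a b by (intro sum.cong refl, subst mat_mult_entry) (auto intro: rep_carrier[OF rep])
  also have "\<dots> = (\<Sum>s\<in>carrier G. (if b = a then 1 else 0))"
    using a b by (intro sum.cong refl) (simp add: rep_inv_mult[OF rep])
  finally have tr: "mat_trace d T = (if a = b then of_nat (card (carrier G)) else 0)" by auto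
  have "mat_trace d T = c * of_nat d" unfolding c mat_trace_def by simp
  with tr d0 have cv: "c = (if a = b then of_nat (card (carrier G)) / of_nat d else 0)"
    by (auto simp: field_simps split: if_splits)
  have "T $$ (i, j) = (if i = j then c else 0)" using c i j by simp
  then show ?thesis using cv i j by (auto simp: T_def orthT_def)
qed

end

context group
begin

lemma repa_carrier[simp]: "repa G d \<rho> a \<in> carrier_mat d d"
  unfolding repa_def by simp

lemma repa_dim[simp]: "dim_row (repa G d \<rho> a) = d" "dim_col (repa G d \<rho> a) = d"
  unfolding repa_def by simp_all

lemma repa_vec_entry:
  assumes rep: "is_rep G d \<rho>" and v: "v \<in> carrier_vec d" and i: "i < d"
  shows "(repa G d \<rho> a *\<^sub>v v) $ i = (\<Sum>s\<in>carrier G. a s * (\<rho> s *\<^sub>v v) $ i)"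
proof -
  have "(repa G d \<rho> a *\<^sub>v v) $ i = (\<Sum>k<d. (\<Sum>s\<in>carrier G. a s * \<rho> s $$ (i, k)) * v $ k)"
    using v i by (subst mat_vec_entry[OF repa_carrier v i]) (simp add: repa_def)
  also have "\<dots> = (\<Sum>s\<in>carrier G. a s * (\<Sum>k<d. \<rho> s $$ (i, k) * v $ k))"
    unfolding sum_distrib_left sum_distrib_right by (subst sum.swap) (simp add: mult.assoc)
  also have "\<dots> = (\<Sum>s\<in>carrier G. a s * (\<rho> s *\<^sub>v v) $ i)"
    using rep v i by (intro sum.cong refl) (simp add: mat_vec_entry[OF rep_carrier[OF rep]])
  finally show ?thesis .
qed

lemma repa_conv:
  assumes rep: "is_rep G d \<rho>"
  shows "repa G d \<rho> (conv G a b) = repa G d \<rho> a * repa G d \<rho> b"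
proof (rule eq_matI)
  fix i j assume "i < dim_row (repa G d \<rho> a * repa G d \<rho> b)" "j < dim_col (repa G d \<rho> a * repa G d \<rho> b)"
  then have i: "i < d" and j: "j < d" by auto
  have "repa G d \<rho> (conv G a b) $$ (i, j) = (\<Sum>u\<in>carrier G. \<Sum>s\<in>carrier G. a s * b (inv s \<otimes> u) * \<rho> u $$ (i, j))"
    using i j by (simp add: repa_def conv_def sum_distrib_right)
  also have "\<dots> = (\<Sum>s\<in>carrier G. a s * (\<Sum>u\<in>carrier G. b (inv s \<otimes> u) * \<rho> u $$ (i, j)))"
    by (subst sum.swap) (simp add: sum_distrib_left mult.assoc)
  also have "\<dots> = (\<Sum>s\<in>carrier G. a s * (\<Sum>t\<in>carrier G. b t * \<rho> (s \<otimes> t) $$ (i, j)))"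
  proof (intro sum.cong refl)
    fix s assume s: "s \<in> carrier G"
    have "(\<Sum>t\<in>carrier G. b t * \<rho> (s \<otimes> t) $$ (i, j)) = (\<Sum>t\<in>carrier G. b (inv s \<otimes> (s \<otimes> t)) * \<rho> (s \<otimes> t) $$ (i, j))"
      using s by (intro sum.cong refl) (simp add: m_assoc[symmetric])
    also have "\<dots> = (\<Sum>u\<in>carrier G. b (inv s \<otimes> u) * \<rho> u $$ (i, j))"
      by (rule sum_lmult_reindex[OF s, of "\<lambda>u. b (inv s \<otimes> u) * \<rho> u $$ (i, j)"])
    finally show "a s * (\<Sum>u\<in>carrier G. b (inv s \<otimes> u) * \<rho> u $$ (i, j)) = a s * (\<Sum>t\<in>carrier G. b t * \<rho> (s \<otimes> t) $$ (i, j))"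
      by simp
  qed
  also have "\<dots> = (\<Sum>s\<in>carrier G. \<Sum>t\<in>carrier G. \<Sum>k<d. (a s * \<rho> s $$ (i, k)) * (b t * \<rho> t $$ (k, j)))"
    using rep i j by (intro sum.cong refl) (simp add: rep_mult_entry sum_distrib_left mult_ac)
  also have "\<dots> = (\<Sum>s\<in>carrier G. \<Sum>k<d. \<Sum>t\<in>carrier G. (a s * \<rho> s $$ (i, k)) * (b t * \<rho> t $$ (k, j)))"
    by (intro sum.cong refl) (rule sum.swap)
  also have "\<dots> = (\<Sum>k<d. \<Sum>s\<in>carrier G. \<Sum>t\<in>carrier G. (a s * \<rho> s $$ (i, k)) * (b t * \<rho> t $$ (k, j)))"
    by (rule sum.swap)
  also have "\<dots> = (\<Sum>k<d. (\<Sum>s\<in>carrier G. a s * \<rho> s $$ (i, k)) * (\<Sum>t\<in>carrier G. b t * \<rho> t $$ (k, j)))"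
    by (simp add: sum_product)
  also have "\<dots> = (repa G d \<rho> a * repa G d \<rho> b) $$ (i, j)"
    using i j by (subst mat_mult_entry[OF repa_carrier repa_carrier i j]) (simp add: repa_def)
  finally show "repa G d \<rho> (conv G a b) $$ (i, j) = (repa G d \<rho> a * repa G d \<rho> b) $$ (i, j)" .
qed auto

lemma repa_class_comm:
  assumes rep: "is_rep G d \<rho>" and cl: "classf G a" and t: "t \<in> carrier G"
  shows "\<rho> t * repa G d \<rho> a = repa G d \<rho> a * \<rho> t"
proof (rule eq_matI)
  have Rt: "\<rho> t \<in> carrier_mat d d" using rep t by (rule rep_carrier)
  fix i j assume "i < dim_row (repa G d \<rho> a * \<rho> t)" "j < dim_col (repa G d \<rho> a * \<rho> t)"
  then have i: "i < d" and j: "j < d" using Rt by auto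
  have "(\<rho> t * repa G d \<rho> a) $$ (i, j) = (\<Sum>k<d. \<rho> t $$ (i, k) * (\<Sum>s\<in>carrier G. a s * \<rho> s $$ (k, j)))"
    using i j by (subst mat_mult_entry[OF Rt repa_carrier i j]) (simp add: repa_def)
  also have "\<dots> = (\<Sum>s\<in>carrier G. \<Sum>k<d. a s * (\<rho> t $$ (i, k) * \<rho> s $$ (k, j)))"
    unfolding sum_distrib_left by (subst sum.swap) (simp add: mult_ac)
  also have "\<dots> = (\<Sum>s\<in>carrier G. a s * \<rho> (t \<otimes> s) $$ (i, j))"
    using rep t i j by (intro sum.cong refl) (simp add: rep_mult_entry sum_distrib_left)
  also have "\<dots> = (\<Sum>s\<in>carrier G. a s * \<rho> (s \<otimes> t) $$ (i, j))"
  proof (rule sum.reindex_bij_witness[where i="\<lambda>s. inv t \<otimes> s \<otimes> t" and j="\<lambda>s. t \<otimes> s \<otimes> inv t"])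
    fix s assume s: "s \<in> carrier G"
    show "inv t \<otimes> (t \<otimes> s \<otimes> inv t) \<otimes> t = s" using s t by (simp add: m_assoc[symmetric]) (simp add: m_assoc)
    show "t \<otimes> s \<otimes> inv t \<in> carrier G" using s t by simp
    show "t \<otimes> (inv t \<otimes> s \<otimes> t) \<otimes> inv t = s" using s t by (simp add: m_assoc[symmetric]) (simp add: m_assoc)
    show "inv t \<otimes> s \<otimes> t \<in> carrier G" using s t by simp
    have "a (t \<otimes> s \<otimes> inv t) = a s" using cl s t unfolding classf_def by auto
    moreover have "t \<otimes> s \<otimes> inv t \<otimes> t = t \<otimes> s" using s t by (simp add: m_assoc)
    ultimately show "a (t \<otimes> s \<otimes> inv t) * \<rho> (t \<otimes> s \<otimes> inv t \<otimes> t) $$ (i, j) = a s * \<rho> (t \<otimes> s) $$ (i, j)"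
      by simp
  qed
  also have "\<dots> = (\<Sum>s\<in>carrier G. \<Sum>k<d. a s * (\<rho> s $$ (i, k) * \<rho> t $$ (k, j)))"
    using rep t i j by (intro sum.cong refl) (simp add: rep_mult_entry sum_distrib_left)
  also have "\<dots> = (\<Sum>k<d. (\<Sum>s\<in>carrier G. a s * \<rho> s $$ (i, k)) * \<rho> t $$ (k, j))"
    unfolding sum_distrib_right by (subst sum.swap) (simp add: mult_ac)
  also have "\<dots> = (repa G d \<rho> a * \<rho> t) $$ (i, j)"
    using i j by (subst mat_mult_entry[OF repa_carrier Rt i j]) (simp add: repa_def)
  finally show "(\<rho> t * repa G d \<rho> a) $$ (i, j) = (repa G d \<rho> a * \<rho> t) $$ (i, j)" .
qed (use rep_carrier[OF rep t] in auto)

lemma regular_rep: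
  assumes fin: "finite (carrier G)"
  obtains N and \<sigma> :: "'a \<Rightarrow> 'k::field mat" where "is_rep G N \<sigma>"
    "\<And>a. \<forall>v\<in>carrier_vec N. repa G N \<sigma> a *\<^sub>v v = 0\<^sub>v N \<Longrightarrow> \<forall>u\<in>carrier G. a u = 0"
proof -
  define N where "N = card (carrier G)"
  obtain idx where bij: "bij_betw idx {0..<N} (carrier G)"
    using ex_bij_betw_nat_finite[OF fin] unfolding N_def by blast
  have idx: "\<And>i. i < N \<Longrightarrow> idx i \<in> carrier G" using bij by (auto simp: bij_betw_def)
  have idx_inj: "\<And>i j. i < N \<Longrightarrow> j < N \<Longrightarrow> idx i = idx j \<Longrightarrow> i = j"
    using bij by (auto simp: bij_betw_def inj_on_def)
  have idx_surj: "\<And>u. u \<in> carrier G \<Longrightarrow> \<exists>i<N. idx i = u"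
    using bij unfolding bij_betw_def by (metis atLeastLessThan_iff imageE)
  define \<sigma> :: "'a \<Rightarrow> 'k mat" where "\<sigma> s = mat N N (\<lambda>(i, j). if idx i = s \<otimes> idx j then 1 else 0)" for s
  have rep: "is_rep G N \<sigma>"
    unfolding is_rep_def
  proof (intro conjI ballI)
    show "\<And>s. \<sigma> s \<in> carrier_mat N N" unfolding \<sigma>_def by simp
    show "\<sigma> \<one> = 1\<^sub>m N" unfolding \<sigma>_def using idx idx_inj by (intro eq_matI) auto
    fix s t assume s: "s \<in> carrier G" and t: "t \<in> carrier G"
    show "\<sigma> (s \<otimes> t) = \<sigma> s * \<sigma> t"
    proof (rule eq_matI)
      fix i j assume "i < dim_row (\<sigma> s * \<sigma> t)" "j < dim_col (\<sigma> s * \<sigma> t)"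
      then have i: "i < N" and j: "j < N" unfolding \<sigma>_def by auto
      obtain k0 where k0: "k0 < N" "idx k0 = t \<otimes> idx j" using idx_surj[of "t \<otimes> idx j"] t idx j by auto
      have "(\<sigma> s * \<sigma> t) $$ (i, j) = (\<Sum>k<N. \<sigma> s $$ (i, k) * \<sigma> t $$ (k, j))"
        using i j by (intro mat_mult_entry) (auto simp: \<sigma>_def)
      also have "\<dots> = (\<Sum>k<N. if k = k0 then (if idx i = s \<otimes> idx k0 then 1 else 0) else 0)"
        using i j k0 idx_inj by (intro sum.cong refl) (auto simp: \<sigma>_def)
      also have "\<dots> = (if idx i = s \<otimes> t \<otimes> idx j then 1 else 0)"
        using k0 s t idx j by (simp add: m_assoc)
      finally show "\<sigma> (s \<otimes> t) $$ (i, j) = (\<sigma> s * \<sigma> t) $$ (i, j)"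
        using i j by (simp add: \<sigma>_def)
    qed (auto simp: \<sigma>_def)
  qed
  show ?thesis
  proof (rule that[OF rep])
    fix a assume h: "\<forall>v\<in>carrier_vec N. repa G N \<sigma> a *\<^sub>v v = 0\<^sub>v N"
    obtain j1 where j1: "j1 < N" "idx j1 = \<one>" using idx_surj[of \<one>] by auto
    show "\<forall>u\<in>carrier G. a u = 0"
    proof
      fix u assume u: "u \<in> carrier G"
      obtain i where i: "i < N" "idx i = u" using idx_surj[OF u] by auto
      have "(repa G N \<sigma> a *\<^sub>v unit_vec N j1) $ i = 0" using h i by simp
      moreover have "(repa G N \<sigma> a *\<^sub>v unit_vec N j1) $ i = repa G N \<sigma> a $$ (i, j1)"
        using i j1 by simp
      moreover have "repa G N \<sigma> a $$ (i, j1) = (\<Sum>s\<in>carrier G. if s = u then a s else 0)"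
        using i j1 idx u by (auto simp: repa_def \<sigma>_def intro!: sum.cong)
      ultimately show "a u = 0" using u fin by simp
    qed
  qed
qed

lemma repa_cong: "(\<And>s. s \<in> carrier G \<Longrightarrow> a s = b s) \<Longrightarrow> repa G d \<rho> a = repa G d \<rho> b"
  unfolding repa_def by (intro eq_matI) auto

lemma kill_lemma:
  fixes a :: "'a \<Rightarrow> 'k::field"
  assumes fin: "finite (carrier G)" and cl: "classf G a"
    and idem: "\<forall>u\<in>carrier G. conv G a a u = a u"
    and kill: "\<And>d' (\<rho>' :: 'a \<Rightarrow> 'k mat). irr_rep G d' \<rho>' \<Longrightarrow> repa G d' \<rho>' a = 0\<^sub>m d' d'"
  shows "\<forall>u\<in>carrier G. a u = 0"
proof (rule ccontr)
  assume contra: "\<not> (\<forall>u\<in>carrier G. a u = 0)"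
  obtain N and \<sigma> :: "'a \<Rightarrow> 'k mat" where rep: "is_rep G N \<sigma>"
    and inj: "\<And>a. \<forall>v\<in>carrier_vec N. repa G N \<sigma> a *\<^sub>v v = 0\<^sub>v N \<Longrightarrow> \<forall>u\<in>carrier G. a u = 0"
    using regular_rep[OF fin] by blast
  define F where "F = repa G N \<sigma> a"
  have F: "F \<in> carrier_mat N N" unfolding F_def by simp
  from contra inj obtain v0 where v0: "v0 \<in> carrier_vec N" "F *\<^sub>v v0 \<noteq> 0\<^sub>v N"
    unfolding F_def by blast
  have FF: "F * F = F"
  proof -
    have "F * F = repa G N \<sigma> (conv G a a)" unfolding F_def by (rule repa_conv[OF rep, symmetric])
    also have "\<dots> = F" unfolding F_def using idem by (intro repa_cong) auto
    finally show ?thesis .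
  qed
  have Fcomm: "\<And>t. t \<in> carrier G \<Longrightarrow> \<sigma> t * F = F * \<sigma> t"
    unfolding F_def by (rule repa_class_comm[OF rep cl])
  have Rs: "\<And>s. s \<in> carrier G \<Longrightarrow> \<sigma> s \<in> carrier_mat N N" using rep by (rule rep_carrier)
  have cv0: "\<And>c. c \<in> carrier_vec 0 \<Longrightarrow> c = (0\<^sub>v 0 :: 'k vec)" by (auto intro!: eq_vecI)
  have mv0: "\<And>(B :: 'k mat) n. B \<in> carrier_mat n 0 \<Longrightarrow> B *\<^sub>v 0\<^sub>v 0 = 0\<^sub>v n"
    by (intro eq_vecI) (auto simp: scalar_prod_def)
  define good where "good k \<longleftrightarrow> 0 < k \<and> (\<exists>B. inj_mat N k B \<and>
      (\<forall>s\<in>carrier G. \<forall>c\<in>carrier_vec k. \<exists>c'\<in>carrier_vec k. \<sigma> s *\<^sub>v (B *\<^sub>v c) = B *\<^sub>v c') \<and>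
      (\<forall>c\<in>carrier_vec k. F *\<^sub>v (B *\<^sub>v c) = B *\<^sub>v c))" for k
  have "\<exists>k. good k"
  proof -
    let ?R = "{F *\<^sub>v v | v. v \<in> carrier_vec N}"
    have "is_subsp N ?R"
      unfolding is_subsp_def
    proof (intro conjI ballI allI)
      show "?R \<subseteq> carrier_vec N" using F by auto
      show "0\<^sub>v N \<in> ?R" using F by (auto intro!: exI[of _ "0\<^sub>v N"])
      fix x y assume "x \<in> ?R" "y \<in> ?R"
      then obtain u v where "u \<in> carrier_vec N" "v \<in> carrier_vec N" "x = F *\<^sub>v u" "y = F *\<^sub>v v" by auto
      then show "x + y \<in> ?R" using F by (auto simp: mult_add_distrib_mat_vec intro!: exI[of _ "u + v"])
    next
      fix c x assume "x \<in> ?R"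
      then obtain u where "u \<in> carrier_vec N" "x = F *\<^sub>v u" by auto
      then show "c \<cdot>\<^sub>v x \<in> ?R" using F by (auto simp: mult_mat_vec intro!: exI[of _ "c \<cdot>\<^sub>v u"])
    qed
    from basis_lemma[OF this] obtain k1 B1 where B1: "inj_mat N k1 B1" and R: "?R = {B1 *\<^sub>v c | c. c \<in> carrier_vec k1}"
      by auto
    have B1c: "B1 \<in> carrier_mat N k1" using B1 unfolding inj_mat_def by auto
    have "good k1" unfolding good_def
    proof (intro conjI exI[of _ B1] ballI)
      show "0 < k1"
      proof (rule ccontr)
        assume "\<not> 0 < k1"
        then have k0: "k1 = 0" by simp
        have "F *\<^sub>v v0 \<in> ?R" using v0 by auto
        then obtain c where c: "c \<in> carrier_vec k1" "F *\<^sub>v v0 = B1 *\<^sub>v c" using R by blast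
        have "c = 0\<^sub>v 0" using c(1) k0 cv0 by simp
        then have "B1 *\<^sub>v c = 0\<^sub>v N" using mv0[of B1 N] B1c k0 by simp
        with c v0 show False by simp
      qed
      show "inj_mat N k1 B1" by fact
    next
      fix s and c :: "'k vec" assume s: "s \<in> carrier G" and c: "c \<in> carrier_vec k1"
      have "B1 *\<^sub>v c \<in> ?R" using R c by auto
      then obtain v where v: "v \<in> carrier_vec N" "B1 *\<^sub>v c = F *\<^sub>v v" by auto
      have "\<sigma> s *\<^sub>v (B1 *\<^sub>v c) = (\<sigma> s * F) *\<^sub>v v" using v Rs[OF s] F by simp
      also have "\<dots> = F *\<^sub>v (\<sigma> s *\<^sub>v v)" using Fcomm[OF s] v Rs[OF s] F by simp
      finally have "\<sigma> s *\<^sub>v (B1 *\<^sub>v c) \<in> ?R" using v Rs[OF s] by auto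
      then show "\<exists>c'\<in>carrier_vec k1. \<sigma> s *\<^sub>v (B1 *\<^sub>v c) = B1 *\<^sub>v c'" using R by auto
    next
      fix c :: "'k vec" assume c: "c \<in> carrier_vec k1"
      have "B1 *\<^sub>v c \<in> ?R" using R c by auto
      then obtain v where v: "v \<in> carrier_vec N" "B1 *\<^sub>v c = F *\<^sub>v v" by auto
      have "F *\<^sub>v (F *\<^sub>v v) = (F * F) *\<^sub>v v" using F v by simp
      then show "F *\<^sub>v (B1 *\<^sub>v c) = B1 *\<^sub>v c" using v FF by simp
    qed
    then show ?thesis by blast
  qed
  define k where "k = (LEAST k. good k)"
  have gk: "good k" unfolding k_def using \<open>\<exists>k. good k\<close> by (rule LeastI_ex)
  have kmin: "\<And>k'. good k' \<Longrightarrow> k \<le> k'" unfolding k_def by (rule Least_le)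
  from gk obtain B where kpos: "0 < k" and B: "inj_mat N k B"
    and Binv: "\<forall>s\<in>carrier G. \<forall>c\<in>carrier_vec k. \<exists>c'\<in>carrier_vec k. \<sigma> s *\<^sub>v (B *\<^sub>v c) = B *\<^sub>v c'"
    and BF: "\<forall>c\<in>carrier_vec k. F *\<^sub>v (B *\<^sub>v c) = B *\<^sub>v c"
    unfolding good_def by blast
  have Bc: "B \<in> carrier_mat N k" using B unfolding inj_mat_def by auto
  define cc where "cc s j = (SOME c'. c' \<in> carrier_vec k \<and> \<sigma> s *\<^sub>v (B *\<^sub>v unit_vec k j) = B *\<^sub>v c')" for s j
  have cc: "cc s j \<in> carrier_vec k \<and> \<sigma> s *\<^sub>v (B *\<^sub>v unit_vec k j) = B *\<^sub>v cc s j"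
    if s: "s \<in> carrier G" and j: "j < k" for s j
  proof -
    have "\<exists>c'. c' \<in> carrier_vec k \<and> \<sigma> s *\<^sub>v (B *\<^sub>v unit_vec k j) = B *\<^sub>v c'"
      using Binv s j by fastforce
    then show ?thesis unfolding cc_def by (rule someI_ex)
  qed
  define M where "M s = mat k k (\<lambda>(i, j). cc s j $ i)" for s
  have Mc: "\<And>s. M s \<in> carrier_mat k k" unfolding M_def by simp
  have MB: "\<sigma> s *\<^sub>v (B *\<^sub>v c) = B *\<^sub>v (M s *\<^sub>v c)" if s: "s \<in> carrier G" and c: "c \<in> carrier_vec k" for s c
  proof -
    have SB: "\<sigma> s * B = B * M s"
    proof (rule mat_eq_from_unit)
      show "\<sigma> s * B \<in> carrier_mat N k" using Rs[OF s] Bc by simp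
      show "B * M s \<in> carrier_mat N k" using Mc Bc by simp
      fix j assume j: "j < k"
      have Me: "M s *\<^sub>v unit_vec k j = cc s j"
        using cc[OF s j] j by (intro eq_vecI) (auto simp: M_def)
      have "(\<sigma> s * B) *\<^sub>v unit_vec k j = \<sigma> s *\<^sub>v (B *\<^sub>v unit_vec k j)" using Rs[OF s] Bc by simp
      also have "\<dots> = B *\<^sub>v (M s *\<^sub>v unit_vec k j)" using cc[OF s j] Me by simp
      also have "\<dots> = (B * M s) *\<^sub>v unit_vec k j" using Bc Mc[of s] by simp
      finally show "(\<sigma> s * B) *\<^sub>v unit_vec k j = (B * M s) *\<^sub>v unit_vec k j" .
    qed
    have "\<sigma> s *\<^sub>v (B *\<^sub>v c) = (\<sigma> s * B) *\<^sub>v c" using Rs[OF s] Bc c by simp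
    also have "\<dots> = (B * M s) *\<^sub>v c" by (simp only: SB)
    also have "\<dots> = B *\<^sub>v (M s *\<^sub>v c)" using Bc Mc[of s] c by simp
    finally show ?thesis .
  qed
  have repM: "is_rep G k M"
    unfolding is_rep_def
  proof (intro conjI ballI)
    show "\<And>s. M s \<in> carrier_mat k k" by (rule Mc)
    show "M \<one> = 1\<^sub>m k"
    proof (rule mat_eq_from_vec[OF Mc])
      fix c :: "'k vec" assume c: "c \<in> carrier_vec k"
      have "B *\<^sub>v (M \<one> *\<^sub>v c) = B *\<^sub>v c" using MB[OF one_closed c] rep_one[OF rep] Bc c by simp
      moreover have "M \<one> *\<^sub>v c \<in> carrier_vec k" using Mc[of \<one>] c by simp
      ultimately show "M \<one> *\<^sub>v c = 1\<^sub>m k *\<^sub>v c" using inj_mat_cancel[OF B _ c] c by simp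
    qed simp
    fix s t assume s: "s \<in> carrier G" and t: "t \<in> carrier G"
    show "M (s \<otimes> t) = M s * M t"
    proof (rule mat_eq_from_vec[OF Mc])
      fix c :: "'k vec" assume c: "c \<in> carrier_vec k"
      have "B *\<^sub>v (M (s \<otimes> t) *\<^sub>v c) = \<sigma> (s \<otimes> t) *\<^sub>v (B *\<^sub>v c)" using MB s t c by simp
      also have "\<dots> = \<sigma> s *\<^sub>v (\<sigma> t *\<^sub>v (B *\<^sub>v c))" using rep_mult[OF rep s t] Rs[OF s] Rs[OF t] Bc c by simp
      also have "\<dots> = B *\<^sub>v (M s *\<^sub>v (M t *\<^sub>v c))" using MB[OF t c] MB[OF s, of "M t *\<^sub>v c"] Mc[of t] c by simp
      also have "\<dots> = B *\<^sub>v ((M s * M t) *\<^sub>v c)" using Mc[of s] Mc[of t] c by simp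
      finally have eq: "B *\<^sub>v (M (s \<otimes> t) *\<^sub>v c) = B *\<^sub>v ((M s * M t) *\<^sub>v c)" .
      have c1: "M (s \<otimes> t) *\<^sub>v c \<in> carrier_vec k" using Mc[of "s \<otimes> t"] c by simp
      have c2: "(M s * M t) *\<^sub>v c \<in> carrier_vec k" using Mc[of s] Mc[of t] c by simp
      show "M (s \<otimes> t) *\<^sub>v c = (M s * M t) *\<^sub>v c"
        by (rule inj_mat_cancel[OF B c1 c2 eq])
    qed (use Mc[of s] Mc[of t] in simp)
  qed
  have irrM: "irr_rep G k M"
    unfolding irr_rep_def
  proof (intro conjI allI impI)
    show "is_rep G k M" by fact
    show "0 < k" by fact
    fix W assume W: "invariant_subspace G k M W"
    show "W = {0\<^sub>v k} \<or> W = carrier_vec k"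
    proof (cases "W = {0\<^sub>v k}")
      case True
      then show ?thesis by simp
    next
      case False
      then have "W \<noteq> {0\<^sub>v k}" .
      moreover have W0: "0\<^sub>v k \<in> W" using W unfolding invariant_subspace_def by auto
      ultimately obtain w where w: "w \<in> W" "w \<noteq> 0\<^sub>v k" by auto
      have "is_subsp k W" using W unfolding invariant_subspace_def is_subsp_def by auto
      from basis_lemma[OF this] obtain k' B' where k': "k' \<le> k" and B': "inj_mat k k' B'"
        and WB: "W = {B' *\<^sub>v c | c. c \<in> carrier_vec k'}" by auto
      have B'c: "B' \<in> carrier_mat k k'" using B' unfolding inj_mat_def by auto
      have "good k'" unfolding good_def
      proof (intro conjI exI[of _ "B * B'"] ballI)
        show "0 < k'"
        proof (rule ccontr)
          assume "\<not> 0 < k'"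
          then have k0: "k' = 0" by simp
          obtain c where c: "c \<in> carrier_vec k'" "w = B' *\<^sub>v c" using w(1) WB by blast
          have "c = 0\<^sub>v 0" using c(1) k0 cv0 by simp
          then have "B' *\<^sub>v c = 0\<^sub>v k" using mv0[of B' k] B'c k0 by simp
          with c w show False by simp
        qed
        show "inj_mat N k' (B * B')" unfolding inj_mat_def
        proof (intro conjI ballI impI)
          show "B * B' \<in> carrier_mat N k'" using Bc B'c by simp
          fix c :: "'k vec" assume c: "c \<in> carrier_vec k'" and z: "(B * B') *\<^sub>v c = 0\<^sub>v N"
          have "B *\<^sub>v (B' *\<^sub>v c) = 0\<^sub>v N" using z Bc B'c c by simp
          then have "B' *\<^sub>v c = 0\<^sub>v k" using B B'c c unfolding inj_mat_def by auto
          then show "c = 0\<^sub>v k'" using B' c unfolding inj_mat_def by auto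
        qed
      next
        fix s and c :: "'k vec" assume s: "s \<in> carrier G" and c: "c \<in> carrier_vec k'"
        have "B' *\<^sub>v c \<in> W" using WB c by auto
        then have "M s *\<^sub>v (B' *\<^sub>v c) \<in> W" using W s unfolding invariant_subspace_def by auto
        then obtain c'' where c'': "c'' \<in> carrier_vec k'" "M s *\<^sub>v (B' *\<^sub>v c) = B' *\<^sub>v c''" using WB by auto
        have "\<sigma> s *\<^sub>v ((B * B') *\<^sub>v c) = \<sigma> s *\<^sub>v (B *\<^sub>v (B' *\<^sub>v c))" using Bc B'c c by simp
        also have "\<dots> = B *\<^sub>v (M s *\<^sub>v (B' *\<^sub>v c))" using MB[OF s] B'c c by simp
        also have "\<dots> = (B * B') *\<^sub>v c''" using c'' Bc B'c by simp
        finally show "\<exists>c'\<in>carrier_vec k'. \<sigma> s *\<^sub>v ((B * B') *\<^sub>v c) = (B * B') *\<^sub>v c'" using c'' by blast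
      next
        fix c :: "'k vec" assume c: "c \<in> carrier_vec k'"
        have "(B * B') *\<^sub>v c = B *\<^sub>v (B' *\<^sub>v c)" using Bc B'c c by simp
        then show "F *\<^sub>v ((B * B') *\<^sub>v c) = (B * B') *\<^sub>v c" using BF B'c c by simp
      qed
      with kmin k' have kk: "k' = k" by (simp add: le_antisym)
      have "W = carrier_vec k"
      proof
        show "W \<subseteq> carrier_vec k" using W unfolding invariant_subspace_def by auto
        show "carrier_vec k \<subseteq> W"
        proof
          fix v :: "'k vec" assume "v \<in> carrier_vec k"
          from inj_square_surj[OF B'[unfolded kk] this] obtain c where "c \<in> carrier_vec k" "B' *\<^sub>v c = v" by auto
          then show "v \<in> W" using WB kk by auto
        qed
      qed
      then show ?thesis by simp
    qed
  qed
  have z: "repa G k M a = 0\<^sub>m k k" by (rule kill[OF irrM])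
  have key: "B *\<^sub>v (repa G k M a *\<^sub>v c) = F *\<^sub>v (B *\<^sub>v c)" if c: "c \<in> carrier_vec k" for c
  proof (rule eq_vecI)
    fix i assume "i < dim_vec (F *\<^sub>v (B *\<^sub>v c))"
    then have i: "i < N" using F by simp
    have "(B *\<^sub>v (repa G k M a *\<^sub>v c)) $ i = (\<Sum>l<k. B $$ (i, l) * (repa G k M a *\<^sub>v c) $ l)"
      using i c by (intro mat_vec_entry[OF Bc] mult_mat_vec_carrier[OF repa_carrier])
    also have "\<dots> = (\<Sum>l<k. B $$ (i, l) * (\<Sum>s\<in>carrier G. a s * (M s *\<^sub>v c) $ l))"
    proof (intro sum.cong refl)
      fix l assume "l \<in> {..<k}"
      then have l: "l < k" by simp
      show "B $$ (i, l) * (repa G k M a *\<^sub>v c) $ l = B $$ (i, l) * (\<Sum>s\<in>carrier G. a s * (M s *\<^sub>v c) $ l)"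
        by (simp only: repa_vec_entry[OF repM c l])
    qed
    also have "\<dots> = (\<Sum>s\<in>carrier G. a s * (\<Sum>l<k. B $$ (i, l) * (M s *\<^sub>v c) $ l))"
      unfolding sum_distrib_left by (subst sum.swap) (simp add: mult_ac)
    also have "\<dots> = (\<Sum>s\<in>carrier G. a s * (\<sigma> s *\<^sub>v (B *\<^sub>v c)) $ i)"
    proof (intro sum.cong refl)
      fix s assume s: "s \<in> carrier G"
      have "(\<Sum>l<k. B $$ (i, l) * (M s *\<^sub>v c) $ l) = (B *\<^sub>v (M s *\<^sub>v c)) $ i"
        using i c Mc[of s] by (intro mat_vec_entry[OF Bc, symmetric]) auto
      then show "a s * (\<Sum>l<k. B $$ (i, l) * (M s *\<^sub>v c) $ l) = a s * (\<sigma> s *\<^sub>v (B *\<^sub>v c)) $ i"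
        using MB[OF s c] by simp
    qed
    also have "\<dots> = (F *\<^sub>v (B *\<^sub>v c)) $ i"
      unfolding F_def using Bc c i by (intro repa_vec_entry[OF rep, symmetric]) auto
    finally show "(B *\<^sub>v (repa G k M a *\<^sub>v c)) $ i = (F *\<^sub>v (B *\<^sub>v c)) $ i" .
  qed (use F Bc in simp)
  let ?e = "unit_vec k 0 :: 'k vec"
  have e: "?e \<in> carrier_vec k" by simp
  have "B *\<^sub>v (0\<^sub>v k) = B *\<^sub>v ?e" using key[OF e] BF e z by simp
  then have "0\<^sub>v k = ?e" using inj_mat_cancel[OF B _ e] by simp
  then have "(0\<^sub>v k :: 'k vec) $ 0 = ?e $ 0" by simp
  then show False using kpos by simp
qed

lemma char_in: "s \<in> carrier G \<Longrightarrow> char_of G d \<rho> s = (\<Sum>b<d. \<rho> s $$ (b, b))"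
  unfolding char_of_def mat_trace_def by simp

lemma char_one: "is_rep G d \<rho> \<Longrightarrow> char_of G d \<rho> \<one> = of_nat d"
  by (simp add: char_in rep_one)

lemma char_comm:
  assumes rep: "is_rep G d \<rho>" and s: "s \<in> carrier G" and t: "t \<in> carrier G"
  shows "char_of G d \<rho> (s \<otimes> t) = char_of G d \<rho> (t \<otimes> s)"
proof -
  have "char_of G d \<rho> (s \<otimes> t) = mat_trace d (\<rho> s * \<rho> t)"
    using s t by (simp add: char_of_def rep_mult[OF rep])
  also have "\<dots> = mat_trace d (\<rho> t * \<rho> s)"
    by (rule mat_trace_comm[OF rep_carrier[OF rep s] rep_carrier[OF rep t]])
  also have "\<dots> = char_of G d \<rho> (t \<otimes> s)"
    using s t by (simp add: char_of_def rep_mult[OF rep])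
  finally show ?thesis .
qed

lemma card_pos: "finite (carrier G) \<Longrightarrow> card (carrier G) > 0"
  using one_closed by (metis card_gt_0_iff empty_iff)

lemma repa_e:
  fixes \<rho>0 \<rho>' :: "'a \<Rightarrow> 'k::field_char_0 mat"
  assumes fin: "finite (carrier G)" and ac: "alg_closed_field TYPE('k)"
    and irr0: "irr_rep G d0 \<rho>0" and irr': "irr_rep G d' \<rho>'"
  shows "repa G d' \<rho>' (eG G (char_of G d0 \<rho>0)) =
    (if char_of G d0 \<rho>0 = char_of G d' \<rho>' then 1\<^sub>m d' else 0\<^sub>m d' d')"
proof (rule eq_matI)
  let ?N = "of_nat (card (carrier G)) :: 'k"
  have N0: "?N \<noteq> 0" using card_pos[OF fin] by simp
  have rep0: "is_rep G d0 \<rho>0" and rep': "is_rep G d' \<rho>'" and d'0: "d' > 0"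
    using irr0 irr' unfolding irr_rep_def by auto
  fix i j assume "i < dim_row (if char_of G d0 \<rho>0 = char_of G d' \<rho>' then 1\<^sub>m d' else 0\<^sub>m d' d')"
    "j < dim_col (if char_of G d0 \<rho>0 = char_of G d' \<rho>' then 1\<^sub>m d' else 0\<^sub>m d' d')"
  then have i: "i < d'" and j: "j < d'" by (auto split: if_splits)
  show "repa G d' \<rho>' (eG G (char_of G d0 \<rho>0)) $$ (i, j) =
    (if char_of G d0 \<rho>0 = char_of G d' \<rho>' then 1\<^sub>m d' else 0\<^sub>m d' d') $$ (i, j)"
  proof (cases "char_of G d0 \<rho>0 = char_of G d' \<rho>'")
    case True
    have "repa G d' \<rho>' (eG G (char_of G d0 \<rho>0)) $$ (i, j) =
      (\<Sum>s\<in>carrier G. of_nat d' / ?N * (\<Sum>b<d'. \<rho>' (inv s) $$ (b, b)) * \<rho>' s $$ (i, j))"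
      using i j True by (simp add: repa_def eG_def char_one[OF rep'] char_in)
    also have "\<dots> = of_nat d' / ?N * (\<Sum>b<d'. \<Sum>s\<in>carrier G. \<rho>' s $$ (i, j) * \<rho>' (inv s) $$ (b, b))"
      unfolding sum_distrib_left sum_distrib_right by (subst sum.swap) (simp add: mult_ac)
    also have "\<dots> = of_nat d' / ?N * (\<Sum>b<d'. if b = i \<and> b = j then ?N / of_nat d' else 0)"
      using i j by (simp add: orth_same[OF ac irr'] conj_commute eq_commute)
    also have "\<dots> = (if i = j then 1 else 0)"
      using i j N0 d'0 by (cases "i = j") (auto intro!: sum.neutral)
    finally show ?thesis using True i j by simp
  next
    case False
    have "repa G d' \<rho>' (eG G (char_of G d0 \<rho>0)) $$ (i, j) =
      (\<Sum>s\<in>carrier G. char_of G d0 \<rho>0 \<one> / ?N * (\<Sum>b<d0. \<rho>0 (inv s) $$ (b, b)) * \<rho>' s $$ (i, j))"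
      using i j by (simp add: repa_def eG_def char_in)
    also have "\<dots> = char_of G d0 \<rho>0 \<one> / ?N * (\<Sum>b<d0. \<Sum>s\<in>carrier G. \<rho>' s $$ (i, j) * \<rho>0 (inv s) $$ (b, b))"
      unfolding sum_distrib_left sum_distrib_right by (subst sum.swap) (simp add: mult_ac)
    also have "\<dots> = 0"
      using i j False by (simp add: orth_diff[OF irr0 irr'])
    finally show ?thesis using False i j by simp
  qed
qed (auto)

lemma conv_e_left:
  fixes \<rho> :: "'a \<Rightarrow> 'k::field mat"
  assumes rep: "is_rep G d \<rho>" and u: "u \<in> carrier G"
  shows "conv G (eG G (char_of G d \<rho>)) a u =
    of_nat d / of_nat (card (carrier G)) * mat_trace d (repa G d \<rho> a * \<rho> (inv u))"
proof -
  let ?\<psi> = "char_of G d \<rho>"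
  let ?c = "of_nat d / of_nat (card (carrier G)) :: 'k"
  have "conv G (eG G ?\<psi>) a u = (\<Sum>s\<in>carrier G. ?c * ?\<psi> (inv s) * a (inv s \<otimes> u))"
    by (simp add: conv_def eG_def char_one[OF rep])
  also have "\<dots> = (\<Sum>t\<in>carrier G. ?c * ?\<psi> (t \<otimes> inv u) * a t)"
  proof (rule sum.reindex_bij_witness[where i="\<lambda>t. u \<otimes> inv t" and j="\<lambda>s. inv s \<otimes> u"])
    fix s assume s: "s \<in> carrier G"
    show "u \<otimes> inv (inv s \<otimes> u) = s" using s u by (simp add: inv_mult_group m_assoc[symmetric])
    show "inv s \<otimes> u \<in> carrier G" using s u by simp
    show "?c * ?\<psi> (inv s \<otimes> u \<otimes> inv u) * a (inv s \<otimes> u) = ?c * ?\<psi> (inv s) * a (inv s \<otimes> u)"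
      using s u by (simp add: m_assoc)
  next
    fix t assume t: "t \<in> carrier G"
    show "inv (u \<otimes> inv t) \<otimes> u = t" using t u by (simp add: inv_mult_group m_assoc)
    show "u \<otimes> inv t \<in> carrier G" using t u by simp
  qed
  also have "\<dots> = ?c * (\<Sum>t\<in>carrier G. a t * mat_trace d (\<rho> t * \<rho> (inv u)))"
    using u by (simp add: sum_distrib_left char_of_def rep_mult[OF rep] mult_ac)
  also have "(\<Sum>t\<in>carrier G. a t * mat_trace d (\<rho> t * \<rho> (inv u))) = mat_trace d (repa G d \<rho> a * \<rho> (inv u))"
  proof -
    have "(\<Sum>t\<in>carrier G. a t * mat_trace d (\<rho> t * \<rho> (inv u))) =
      (\<Sum>t\<in>carrier G. \<Sum>i<d. \<Sum>k<d. a t * \<rho> t $$ (i, k) * \<rho> (inv u) $$ (k, i))"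
      unfolding mat_trace_def using rep u
      by (intro sum.cong refl) (simp add: mat_mult_entry[OF rep_carrier rep_carrier] sum_distrib_left mult_ac)
    also have "\<dots> = (\<Sum>i<d. \<Sum>k<d. \<Sum>t\<in>carrier G. a t * \<rho> t $$ (i, k) * \<rho> (inv u) $$ (k, i))"
      by (subst sum.swap) (simp add: sum.swap[of _ "carrier G" "{..<d}"])
    also have "\<dots> = mat_trace d (repa G d \<rho> a * \<rho> (inv u))"
      unfolding mat_trace_def using rep u
      by (intro sum.cong refl, subst mat_mult_entry[OF repa_carrier rep_carrier[OF rep inv_closed[OF u]]])
        (auto simp: repa_def sum_distrib_right)
    finally show ?thesis .
  qed
  finally show ?thesis by simp
qed

lemma conv_ee:
  fixes \<rho> \<rho>' :: "'a \<Rightarrow> 'k::field_char_0 mat"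
  assumes fin: "finite (carrier G)" and ac: "alg_closed_field TYPE('k)"
    and irr: "irr_rep G d \<rho>" and irr': "irr_rep G d' \<rho>'" and u: "u \<in> carrier G"
  shows "conv G (eG G (char_of G d \<rho>)) (eG G (char_of G d' \<rho>')) u =
    (if char_of G d' \<rho>' = char_of G d \<rho> then eG G (char_of G d \<rho>) u else 0)"
proof -
  have rep: "is_rep G d \<rho>" using irr unfolding irr_rep_def by auto
  have "conv G (eG G (char_of G d \<rho>)) (eG G (char_of G d' \<rho>')) u =
    of_nat d / of_nat (card (carrier G)) * mat_trace d (repa G d \<rho> (eG G (char_of G d' \<rho>')) * \<rho> (inv u))"
    by (rule conv_e_left[OF rep u])
  also have "\<dots> = (if char_of G d' \<rho>' = char_of G d \<rho> then eG G (char_of G d \<rho>) u else 0)"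
  proof (cases "char_of G d' \<rho>' = char_of G d \<rho>")
    case True
    then have "repa G d \<rho> (eG G (char_of G d' \<rho>')) = 1\<^sub>m d" by (subst repa_e[OF fin ac irr' irr]) simp
    moreover have "mat_trace d (1\<^sub>m d * \<rho> (inv u)) = char_of G d \<rho> (inv u)"
      using rep_carrier[OF rep inv_closed[OF u]] u by (simp add: char_of_def)
    ultimately show ?thesis using True by (simp add: eG_def char_one[OF rep])
  next
    case False
    then show ?thesis using rep_carrier[OF rep inv_closed[OF u]] u
      by (simp add: repa_e[OF fin ac irr' irr] mat_trace_def)
  qed
  finally show ?thesis .
qed

lemma eG_class:
  assumes rep: "is_rep G d \<rho>"
  shows "classf G (eG G (char_of G d \<rho>))"
  unfolding classf_def
proof (intro ballI)
  fix s t assume s: "s \<in> carrier G" and t: "t \<in> carrier G"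
  have "inv (t \<otimes> s \<otimes> inv t) = (t \<otimes> inv s) \<otimes> inv t" using s t by (simp add: inv_mult_group m_assoc)
  moreover have "char_of G d \<rho> ((t \<otimes> inv s) \<otimes> inv t) = char_of G d \<rho> (inv t \<otimes> (t \<otimes> inv s))"
    using s t by (intro char_comm[OF rep]) auto
  moreover have "inv t \<otimes> (t \<otimes> inv s) = inv s" using s t by (simp add: m_assoc[symmetric])
  ultimately show "eG G (char_of G d \<rho>) (t \<otimes> s \<otimes> inv t) = eG G (char_of G d \<rho>) s"
    by (simp add: eG_def)
qed

lemma IrrE:
  assumes "\<psi> \<in> Irr G"
  obtains d \<rho> where "irr_rep G d \<rho>" "\<psi> = char_of G d \<rho>"
  using assms unfolding Irr_def by auto

lemma Irr_I: "irr_rep G d \<rho> \<Longrightarrow> char_of G d \<rho> \<in> Irr G"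
  unfolding Irr_def by auto

lemma repa_lin:
  assumes "i < d" "k < d"
  shows "repa G d \<rho> (\<lambda>u. \<Sum>j\<in>J. c j * f j u) $$ (i, k) = (\<Sum>j\<in>J. c j * repa G d \<rho> (f j) $$ (i, k))"
  using assms unfolding repa_def
  by (simp add: sum_distrib_right sum_distrib_left mult_ac) (rule sum.swap)

lemma card_Irr_le:
  assumes fin: "finite (carrier G)" and ac: "alg_closed_field TYPE('k::field_char_0)"
    and S: "finite S" "S \<subseteq> (Irr G :: ('a \<Rightarrow> 'k) set)"
  shows "card S \<le> card (carrier G)"
proof -
  define m where "m = card S"
  define N where "N = card (carrier G)"
  obtain h where h: "bij_betw h {0..<m} S" using ex_bij_betw_nat_finite[OF S(1)] unfolding m_def by blast
  obtain idx where idx: "bij_betw idx {0..<N} (carrier G)"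
    using ex_bij_betw_nat_finite[OF fin] unfolding N_def by blast
  have hS: "\<And>j. j < m \<Longrightarrow> h j \<in> Irr G" using h S(2) by (auto simp: bij_betw_def)
  have h_inj: "\<And>i j. i < m \<Longrightarrow> j < m \<Longrightarrow> h i = h j \<Longrightarrow> i = j"
    using h by (auto simp: bij_betw_def inj_on_def)
  have idx_surj: "\<And>u. u \<in> carrier G \<Longrightarrow> \<exists>i<N. idx i = u"
    using idx unfolding bij_betw_def by (metis atLeastLessThan_iff imageE)
  define A :: "'k mat" where "A = mat N m (\<lambda>(i, j). eG G (h j) (idx i))"
  have "inj_mat N m A" unfolding inj_mat_def
  proof (intro conjI ballI impI)
    show "A \<in> carrier_mat N m" unfolding A_def by simp
    fix c :: "'k vec" assume c: "c \<in> carrier_vec m" and Az: "A *\<^sub>v c = 0\<^sub>v N"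
    have z: "(\<Sum>j<m. c $ j * eG G (h j) u) = 0" if u: "u \<in> carrier G" for u
    proof -
      obtain i where i: "i < N" "idx i = u" using idx_surj[OF u] by auto
      have "(A *\<^sub>v c) $ i = 0" using Az i by simp
      moreover have "(A *\<^sub>v c) $ i = (\<Sum>j<m. A $$ (i, j) * c $ j)"
        using i c by (intro mat_vec_entry) (auto simp: A_def)
      ultimately show ?thesis using i by (simp add: A_def mult.commute)
    qed
    show "c = 0\<^sub>v m"
    proof (intro eq_vecI)
      fix j0 assume "j0 < dim_vec (0\<^sub>v m :: 'k vec)"
      then have j0: "j0 < m" by simp
      obtain d0 \<rho>0 where irr0: "irr_rep G d0 \<rho>0" and e0: "h j0 = char_of G d0 (\<rho>0 :: 'a \<Rightarrow> 'k mat)"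
        using hS[OF j0] by (rule IrrE)
      have d0: "0 < d0" using irr0 unfolding irr_rep_def by auto
      have "repa G d0 \<rho>0 (\<lambda>u. \<Sum>j<m. c $ j * eG G (h j) u) = repa G d0 \<rho>0 (\<lambda>u. 0)"
        using z by (intro repa_cong) auto
      then have "repa G d0 \<rho>0 (\<lambda>u. \<Sum>j<m. c $ j * eG G (h j) u) $$ (0, 0) = 0"
        using d0 by (simp add: repa_def)
      moreover have "repa G d0 \<rho>0 (\<lambda>u. \<Sum>j<m. c $ j * eG G (h j) u) $$ (0, 0) =
          (\<Sum>j<m. c $ j * repa G d0 \<rho>0 (eG G (h j)) $$ (0, 0))"
        by (rule repa_lin[OF d0 d0])
      moreover have "(\<Sum>j<m. c $ j * repa G d0 \<rho>0 (eG G (h j)) $$ (0, 0)) = (\<Sum>j<m. if j = j0 then c $ j else 0)"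
      proof (intro sum.cong refl)
        fix j assume "j \<in> {..<m}"
        then have j: "j < m" by simp
        obtain d1 \<rho>1 where irr1: "irr_rep G d1 \<rho>1" and e1: "h j = char_of G d1 (\<rho>1 :: 'a \<Rightarrow> 'k mat)"
          using hS[OF j] by (rule IrrE)
        have "repa G d0 \<rho>0 (eG G (h j)) $$ (0, 0) = (if h j = h j0 then 1 else 0)"
          using d0 by (simp add: e1 e0 repa_e[OF fin ac irr1 irr0])
        then show "c $ j * repa G d0 \<rho>0 (eG G (h j)) $$ (0, 0) = (if j = j0 then c $ j else 0)"
          using h_inj[OF j j0] by auto
      qed
      ultimately show "c $ j0 = 0\<^sub>v m $ j0" using j0 by simp
    qed (use c in simp)
  qed
  from inj_mat_le[OF this] show ?thesis unfolding m_def N_def .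
qed

lemma finite_Irr:
  assumes fin: "finite (carrier G)" and ac: "alg_closed_field TYPE('k::field_char_0)"
  shows "finite (Irr G :: ('a \<Rightarrow> 'k) set)"
proof (rule ccontr)
  assume "\<not> finite (Irr G :: ('a \<Rightarrow> 'k) set)"
  from infinite_arbitrarily_large[OF this, of "Suc (card (carrier G))"]
  obtain S where "finite S" "card S = Suc (card (carrier G))" "S \<subseteq> (Irr G :: ('a \<Rightarrow> 'k) set)" by auto
  with card_Irr_le[OF fin ac, of S] show False by simp
qed

lemma conv_diff_left: "conv G (\<lambda>x. a x - b x) c u = conv G a c u - conv G b c u"
  unfolding conv_def by (simp add: left_diff_distrib sum_subtractf)

lemma conv_diff_right: "conv G a (\<lambda>x. b x - c x) u = conv G a b u - conv G a c u"
  unfolding conv_def by (simp add: right_diff_distrib sum_subtractf)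

lemma conv_sum_left: "conv G (\<lambda>x. \<Sum>j\<in>J. g j x) c u = (\<Sum>j\<in>J. conv G (g j) c u)"
  unfolding conv_def by (simp add: sum_distrib_right) (rule sum.swap)

lemma conv_sum_right: "conv G a (\<lambda>x. \<Sum>j\<in>J. g j x) u = (\<Sum>j\<in>J. conv G a (g j) u)"
  unfolding conv_def by (simp add: sum_distrib_left) (rule sum.swap)

lemma conv_delta_left:
  assumes fin: "finite (carrier G)" and u: "u \<in> carrier G"
  shows "conv G (\<lambda>x. if x = \<one> then 1 else 0) b u = b u"
proof -
  have "conv G (\<lambda>x. if x = \<one> then 1 else 0) b u = (\<Sum>s\<in>carrier G. if s = \<one> then b (inv s \<otimes> u) else 0)"
    unfolding conv_def by (intro sum.cong refl) auto
  also have "\<dots> = b u" using fin u by simp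
  finally show ?thesis .
qed

lemma conv_delta_right:
  assumes fin: "finite (carrier G)" and u: "u \<in> carrier G"
  shows "conv G a (\<lambda>x. if x = \<one> then 1 else 0) u = a u"
proof -
  have "conv G a (\<lambda>x. if x = \<one> then 1 else 0) u = (\<Sum>s\<in>carrier G. if s = u then a s else 0)"
    unfolding conv_def using u
  proof (intro sum.cong refl)
    fix s assume s: "s \<in> carrier G"
    have "inv s \<otimes> u = \<one> \<longleftrightarrow> s = u"
    proof
      assume "inv s \<otimes> u = \<one>"
      then have "s \<otimes> (inv s \<otimes> u) = s \<otimes> \<one>" by simp
      then show "s = u" using s u by (simp add: m_assoc[symmetric])
    qed (use u in simp)
    then show "a s * (if inv s \<otimes> u = \<one> then 1 else 0) = (if s = u then a s else 0)" by simp
  qed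
  also have "\<dots> = a u" using fin u by simp
  finally show ?thesis .
qed

lemma completeness:
  assumes fin: "finite (carrier G)" and ac: "alg_closed_field TYPE('k::field_char_0)"
  shows "\<forall>u\<in>carrier G. (\<Sum>\<psi>\<in>(Irr G :: ('a \<Rightarrow> 'k) set). eG G \<psi> u) = (if u = \<one> then 1 else 0)"
proof -
  let ?I = "Irr G :: ('a \<Rightarrow> 'k) set"
  have finI: "finite ?I" by (rule finite_Irr[OF fin ac])
  define \<delta> :: "'a \<Rightarrow> 'k" where "\<delta> x = (if x = \<one> then 1 else 0)" for x
  define E where "E x = (\<Sum>\<psi>\<in>?I. eG G \<psi> x)" for x
  define f where "f x = \<delta> x - E x" for x
  have clE: "eG G \<psi> (t \<otimes> s \<otimes> inv t) = eG G \<psi> s" if psi: "\<psi> \<in> ?I" and st: "s \<in> carrier G" "t \<in> carrier G" for \<psi> s t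
  proof -
    obtain d \<rho> where irr: "irr_rep G d \<rho>" and e: "\<psi> = char_of G d (\<rho> :: 'a \<Rightarrow> 'k mat)"
      using psi by (rule IrrE)
    have "is_rep G d \<rho>" using irr unfolding irr_rep_def by auto
    from eG_class[OF this] st show ?thesis unfolding e classf_def by auto
  qed
  have cl: "classf G f"
    unfolding classf_def
  proof (intro ballI)
    fix s t assume s: "s \<in> carrier G" and t: "t \<in> carrier G"
    have "t \<otimes> s \<otimes> inv t = \<one> \<longleftrightarrow> s = \<one>"
    proof
      assume "t \<otimes> s \<otimes> inv t = \<one>"
      then have "inv t \<otimes> (t \<otimes> s \<otimes> inv t) \<otimes> t = inv t \<otimes> \<one> \<otimes> t" by simp
      then show "s = \<one>" using s t by (simp add: m_assoc[symmetric]) (simp add: m_assoc)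
    qed (use t in simp)
    then have "\<delta> (t \<otimes> s \<otimes> inv t) = \<delta> s" unfolding \<delta>_def by simp
    moreover have "E (t \<otimes> s \<otimes> inv t) = E s" unfolding E_def using clE s t by (intro sum.cong) auto
    ultimately show "f (t \<otimes> s \<otimes> inv t) = f s" unfolding f_def by simp
  qed
  have ee: "(\<Sum>\<psi>'\<in>?I. conv G (eG G \<psi>) (eG G \<psi>') u) = eG G \<psi> u"
    if \<psi>: "\<psi> \<in> ?I" and u: "u \<in> carrier G" for \<psi> u
  proof -
    obtain d \<rho> where irr: "irr_rep G d \<rho>" and e: "\<psi> = char_of G d (\<rho> :: 'a \<Rightarrow> 'k mat)"
      using \<psi> by (rule IrrE)
    have "(\<Sum>\<psi>'\<in>?I. conv G (eG G \<psi>) (eG G \<psi>') u) = (\<Sum>\<psi>'\<in>?I. if \<psi>' = \<psi> then eG G \<psi> u else 0)"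
    proof (intro sum.cong refl)
      fix \<psi>' assume "\<psi>' \<in> ?I"
      then obtain d' \<rho>' where irr': "irr_rep G d' \<rho>'" and e': "\<psi>' = char_of G d' (\<rho>' :: 'a \<Rightarrow> 'k mat)"
        by (rule IrrE)
      show "conv G (eG G \<psi>) (eG G \<psi>') u = (if \<psi>' = \<psi> then eG G \<psi> u else 0)"
        unfolding e e' by (rule conv_ee[OF fin ac irr irr' u])
    qed
    also have "\<dots> = eG G \<psi> u" using finI \<psi> by simp
    finally show ?thesis .
  qed
  have idem: "\<forall>u\<in>carrier G. conv G f f u = f u"
  proof
    fix u assume u: "u \<in> carrier G"
    have "conv G f f u = conv G \<delta> f u - conv G E f u" unfolding f_def[abs_def] by (rule conv_diff_left)
    also have "conv G \<delta> f u = f u" unfolding \<delta>_def by (rule conv_delta_left[OF fin u])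
    also have "conv G E f u = conv G E \<delta> u - conv G E E u" unfolding f_def[abs_def] by (rule conv_diff_right)
    also have "conv G E \<delta> u = E u" unfolding \<delta>_def by (rule conv_delta_right[OF fin u])
    also have "conv G E E u = E u"
    proof -
      have "conv G E E u = (\<Sum>\<psi>\<in>?I. \<Sum>\<psi>'\<in>?I. conv G (eG G \<psi>) (eG G \<psi>') u)"
        unfolding E_def[abs_def] conv_sum_left conv_sum_right ..
      also have "\<dots> = (\<Sum>\<psi>\<in>?I. eG G \<psi> u)" using ee u by simp
      finally show ?thesis unfolding E_def .
    qed
    finally show "conv G f f u = f u" by simp
  qed
  have kill: "repa G d' \<rho>' f = 0\<^sub>m d' d'" if irr': "irr_rep G d' \<rho>'" for d' and \<rho>' :: "'a \<Rightarrow> 'k mat"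
  proof (rule eq_matI)
    have rep': "is_rep G d' \<rho>'" using irr' unfolding irr_rep_def by auto
    fix i j assume "i < dim_row (0\<^sub>m d' d' :: 'k mat)" "j < dim_col (0\<^sub>m d' d' :: 'k mat)"
    then have i: "i < d'" and j: "j < d'" by auto
    have "repa G d' \<rho>' f $$ (i, j) = repa G d' \<rho>' \<delta> $$ (i, j) - repa G d' \<rho>' E $$ (i, j)"
      using i j by (simp add: repa_def f_def left_diff_distrib sum_subtractf)
    also have "repa G d' \<rho>' \<delta> $$ (i, j) = 1\<^sub>m d' $$ (i, j)"
    proof -
      have "repa G d' \<rho>' \<delta> $$ (i, j) = (\<Sum>s\<in>carrier G. if s = \<one> then \<rho>' s $$ (i, j) else 0)"
        using i j by (simp add: repa_def \<delta>_def, intro sum.cong refl) auto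
      also have "\<dots> = 1\<^sub>m d' $$ (i, j)" using fin rep_one[OF rep'] by simp
      finally show ?thesis .
    qed
    also have "repa G d' \<rho>' E $$ (i, j) = (\<Sum>\<psi>\<in>?I. 1 * repa G d' \<rho>' (eG G \<psi>) $$ (i, j))"
      unfolding E_def using repa_lin[OF i j, where c="\<lambda>_. 1" and f="\<lambda>\<psi>. eG G \<psi>" and J="?I" and \<rho>=\<rho>'] by simp
    also have "\<dots> = (\<Sum>\<psi>\<in>?I. if \<psi> = char_of G d' \<rho>' then 1\<^sub>m d' $$ (i, j) else 0)"
    proof (intro sum.cong refl)
      fix \<psi> assume "\<psi> \<in> ?I"
      then obtain d0 \<rho>0 where irr0: "irr_rep G d0 \<rho>0" and e: "\<psi> = char_of G d0 (\<rho>0 :: 'a \<Rightarrow> 'k mat)"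
        by (rule IrrE)
      show "1 * repa G d' \<rho>' (eG G \<psi>) $$ (i, j) = (if \<psi> = char_of G d' \<rho>' then 1\<^sub>m d' $$ (i, j) else 0)"
        unfolding e using i j by (simp add: repa_e[OF fin ac irr0 irr'])
    qed
    also have "\<dots> = 1\<^sub>m d' $$ (i, j)" using finI Irr_I[OF irr'] by simp
    finally show "repa G d' \<rho>' f $$ (i, j) = 0\<^sub>m d' d' $$ (i, j)" using i j by simp
  qed auto
  have "\<forall>u\<in>carrier G. f u = 0" by (rule kill_lemma[OF fin cl idem kill])
  then show ?thesis unfolding f_def \<delta>_def E_def by auto
qed

end



lemma smult_smult_mat': "a \<cdot>\<^sub>m (b \<cdot>\<^sub>m A) = (a * b :: 'a::semigroup_mult) \<cdot>\<^sub>m A"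
  by (intro eq_matI) (auto simp: mult.assoc)

lemma sum_fun_app: "(\<Sum>a\<in>A. f a) x = (\<Sum>a\<in>A. f a x)"
  by (induction A rule: infinite_finite_induct) auto

lemma sum_fun_app2: "(\<Sum>a\<in>A. f a) x y = (\<Sum>a\<in>A. f a x y)"
  by (simp add: sum_fun_app)

locale thm_setup = group G for G :: "('g, 'b) monoid_scheme" (structure) +
  fixes \<chi> :: "'g \<Rightarrow> 'k::field_char_0" and g :: 'g and n d :: nat and \<rho> :: "'g \<Rightarrow> 'k mat"
  assumes fin: "finite (carrier G)" and ac: "alg_closed_field TYPE('k)"
    and chi_nz: "\<forall>s\<in>carrier G. \<chi> s \<noteq> 0"
    and chi_mult: "\<forall>s\<in>carrier G. \<forall>t\<in>carrier G. \<chi> (s \<otimes> t) = \<chi> s * \<chi> t"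
    and chi_n: "\<forall>s\<in>carrier G. \<chi> s ^ n = 1"
    and g_in: "g \<in> carrier G" and g_central: "\<forall>s\<in>carrier G. g \<otimes> s = s \<otimes> g"
    and n2: "n \<ge> 2" and irr: "irr_rep G d \<rho>" and lam1: "gn_scalar G g n d \<rho> \<noteq> 1"
begin

abbreviation "lam \<equiv> gn_scalar G g n d \<rho>"

lemma rep: "is_rep G d \<rho>" and d0: "0 < d"
  using irr unfolding irr_rep_def by auto

lemma rho_dims[simp]: "s \<in> carrier G \<Longrightarrow> dim_row (\<rho> s) = d" "s \<in> carrier G \<Longrightarrow> dim_col (\<rho> s) = d"
  using rep_carrier[OF rep] by auto

lemma chi_one: "\<chi> \<one> = 1"
proof -
  have "\<chi> \<one> = \<chi> \<one> * \<chi> \<one>" using chi_mult by (metis one_closed r_one)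
  then show ?thesis using chi_nz by (metis mult_cancel_left1 one_closed)
qed

lemma chi_inv: "s \<in> carrier G \<Longrightarrow> \<chi> (inv s) = inverse (\<chi> s)"
  using chi_mult chi_nz chi_one by (metis inv_closed l_inv inverse_unique mult.commute)

lemma gpow_in: "g [^] (m::nat) \<in> carrier G" using g_in by simp

lemma gpow_central: "s \<in> carrier G \<Longrightarrow> g [^] (m::nat) \<otimes> s = s \<otimes> g [^] m"
proof (induction m)
  case 0 then show ?case by simp
next
  case (Suc m)
  have "g [^] Suc m \<otimes> s = g [^] m \<otimes> (g \<otimes> s)" using Suc g_in by (simp add: m_assoc)
  also have "\<dots> = g [^] m \<otimes> (s \<otimes> g)" using g_central Suc by simp
  also have "\<dots> = s \<otimes> g [^] m \<otimes> g" using Suc g_in by (simp add: m_assoc[symmetric])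
  also have "\<dots> = s \<otimes> g [^] Suc m" using Suc g_in by (simp add: m_assoc)
  finally show ?case .
qed

lemma chi_gpow: "\<chi> (g [^] (m::nat)) = \<chi> g ^ m"
proof (induction m)
  case 0 then show ?case by (simp add: chi_one)
next
  case (Suc m) then show ?case using chi_mult g_in by simp
qed

lemma chi_gn: "\<chi> (g [^] n) = 1" using chi_gpow chi_n g_in by simp

lemma scalar_of_irr:
  fixes \<rho>' :: "'g \<Rightarrow> 'k mat"
  assumes irr': "irr_rep G d' \<rho>'"
  shows "\<rho>' (g [^] n) = gn_scalar G g n d' \<rho>' \<cdot>\<^sub>m 1\<^sub>m d'"
proof -
  have rep': "is_rep G d' \<rho>'" and d'0: "0 < d'" using irr' unfolding irr_rep_def by auto
  have "\<forall>s\<in>carrier G. \<rho>' (g [^] n) * \<rho>' s = \<rho>' s * \<rho>' (g [^] n)"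
    using gpow_central gpow_in by (metis rep_mult[OF rep'])
  from schur1[OF ac irr' rep_carrier[OF rep' gpow_in[of n]] this] obtain c where c: "\<rho>' (g [^] n) = c \<cdot>\<^sub>m 1\<^sub>m d'" by auto
  have uniq: "c' = c" if "\<rho>' (g [^] n) = c' \<cdot>\<^sub>m 1\<^sub>m d'" for c'
  proof -
    have "(c' \<cdot>\<^sub>m 1\<^sub>m d') $$ (0, 0) = (c \<cdot>\<^sub>m 1\<^sub>m d') $$ (0, 0)" using that c by simp
    then show ?thesis using d'0 by simp
  qed
  have "gn_scalar G g n d' \<rho>' = c" unfolding gn_scalar_def
    using c uniq by (intro the_equality) auto
  then show ?thesis using c by simp
qed

lemma char_gn:
  fixes \<rho>' :: "'g \<Rightarrow> 'k mat"
  assumes irr': "irr_rep G d' \<rho>'"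
  shows "char_of G d' \<rho>' (g [^] n) = gn_scalar G g n d' \<rho>' * of_nat d'"
  using scalar_of_irr[OF irr'] gpow_in by (simp add: char_of_def mat_trace_def)

lemma Lambda0_char: "Lambda0 G g n = {\<psi> \<in> (Irr G :: ('g \<Rightarrow> 'k) set). \<psi> (g [^] n) = \<psi> \<one>}"
proof (intro equalityI subsetI)
  fix \<psi> :: "'g \<Rightarrow> 'k" assume "\<psi> \<in> Lambda0 G g n"
  then obtain d' and \<rho>' :: "'g \<Rightarrow> 'k mat" where "\<psi> \<in> Irr G" "irr_rep G d' \<rho>'" "char_of G d' \<rho>' = \<psi>" "gn_scalar G g n d' \<rho>' = 1"
    unfolding Lambda0_def by auto
  moreover have "is_rep G d' \<rho>'" using \<open>irr_rep G d' \<rho>'\<close> unfolding irr_rep_def by auto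
  ultimately show "\<psi> \<in> {\<psi> \<in> Irr G. \<psi> (g [^] n) = \<psi> \<one>}"
    using char_gn[of d' \<rho>'] char_one[of d' \<rho>'] by auto
next
  fix \<psi> :: "'g \<Rightarrow> 'k" assume "\<psi> \<in> {\<psi> \<in> Irr G. \<psi> (g [^] n) = \<psi> \<one>}"
  then have \<psi>: "\<psi> \<in> Irr G" "\<psi> (g [^] n) = \<psi> \<one>" by auto
  from \<psi>(1) obtain d' and \<rho>' :: "'g \<Rightarrow> 'k mat" where irr': "irr_rep G d' \<rho>'" and e: "\<psi> = char_of G d' \<rho>'" by (rule IrrE)
  have rep': "is_rep G d' \<rho>'" and d'0: "0 < d'" using irr' unfolding irr_rep_def by auto
  have "gn_scalar G g n d' \<rho>' * of_nat d' = of_nat d'" using \<psi>(2) char_gn[OF irr'] char_one[OF rep'] e by simp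
  then have "gn_scalar G g n d' \<rho>' = 1" using d'0 by simp
  then show "\<psi> \<in> Lambda0 G g n" unfolding Lambda0_def using \<psi>(1) irr' e by auto
qed

lemma Lambda1_char: "Lambda1 G g n = {\<psi> \<in> (Irr G :: ('g \<Rightarrow> 'k) set). \<psi> (g [^] n) \<noteq> \<psi> \<one>}"
proof (intro equalityI subsetI)
  fix \<psi> :: "'g \<Rightarrow> 'k" assume "\<psi> \<in> Lambda1 G g n"
  then obtain d' and \<rho>' :: "'g \<Rightarrow> 'k mat" where "\<psi> \<in> Irr G" "irr_rep G d' \<rho>'" "char_of G d' \<rho>' = \<psi>" "gn_scalar G g n d' \<rho>' \<noteq> 1"
    unfolding Lambda1_def by auto
  moreover have "is_rep G d' \<rho>'" "0 < d'" using \<open>irr_rep G d' \<rho>'\<close> unfolding irr_rep_def by auto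
  ultimately show "\<psi> \<in> {\<psi> \<in> Irr G. \<psi> (g [^] n) \<noteq> \<psi> \<one>}"
    using char_gn[of d' \<rho>'] char_one[of d' \<rho>'] by auto
next
  fix \<psi> :: "'g \<Rightarrow> 'k" assume "\<psi> \<in> {\<psi> \<in> Irr G. \<psi> (g [^] n) \<noteq> \<psi> \<one>}"
  then have \<psi>: "\<psi> \<in> Irr G" "\<psi> (g [^] n) \<noteq> \<psi> \<one>" by auto
  from \<psi>(1) obtain d' and \<rho>' :: "'g \<Rightarrow> 'k mat" where irr': "irr_rep G d' \<rho>'" and e: "\<psi> = char_of G d' \<rho>'" by (rule IrrE)
  have rep': "is_rep G d' \<rho>'" using irr' unfolding irr_rep_def by auto
  have "gn_scalar G g n d' \<rho>' \<noteq> 1" using \<psi>(2) char_gn[OF irr'] char_one[OF rep'] e by auto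
  then show "\<psi> \<in> Lambda1 G g n" unfolding Lambda1_def using \<psi>(1) irr' e by auto
qed

definition rl :: "nat \<Rightarrow> 'g \<Rightarrow> 'k mat" where
  "rl l s = inverse (\<chi> s) ^ l \<cdot>\<^sub>m \<rho> s"

lemma rl_rep: "is_rep G d (rl l)"
  unfolding is_rep_def
proof (intro conjI ballI)
  show "\<And>s. s \<in> carrier G \<Longrightarrow> rl l s \<in> carrier_mat d d" using rep_carrier[OF rep] by (simp add: rl_def)
  show "rl l \<one> = 1\<^sub>m d" using rep_one[OF rep] chi_one by (auto simp: rl_def intro!: eq_matI)
  fix s t assume s: "s \<in> carrier G" and t: "t \<in> carrier G"
  show "rl l (s \<otimes> t) = rl l s * rl l t"
  proof -
    have Rs: "\<rho> s \<in> carrier_mat d d" "\<rho> t \<in> carrier_mat d d" using rep_carrier[OF rep] s t by auto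
    have "rl l s * rl l t = inverse (\<chi> s) ^ l \<cdot>\<^sub>m (\<rho> s * (inverse (\<chi> t) ^ l \<cdot>\<^sub>m \<rho> t))"
      unfolding rl_def using Rs by (simp add: mult_smult_assoc_mat[of _ d d _ d])
    also have "\<dots> = inverse (\<chi> s) ^ l \<cdot>\<^sub>m (inverse (\<chi> t) ^ l \<cdot>\<^sub>m (\<rho> s * \<rho> t))"
      using Rs by (simp add: mult_smult_distrib[of _ d d _ d])
    also have "\<dots> = rl l (s \<otimes> t)"
      unfolding rl_def using s t chi_mult rep_mult[OF rep s t] by (simp add: smult_smult_mat' power_mult_distrib mult.commute)
    finally show ?thesis by simp
  qed
qed

lemma rl_irr: "irr_rep G d (rl l)"
  unfolding irr_rep_def
proof (intro conjI allI impI)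
  show "is_rep G d (rl l)" by (rule rl_rep)
  show "0 < d" by (rule d0)
  fix W assume W: "invariant_subspace G d (rl l) W"
  have "invariant_subspace G d \<rho> W"
    unfolding invariant_subspace_def
  proof (intro conjI ballI allI)
    show "W \<subseteq> carrier_vec d" "0\<^sub>v d \<in> W" "\<And>v w. v \<in> W \<Longrightarrow> w \<in> W \<Longrightarrow> v + w \<in> W"
      "\<And>c v. v \<in> W \<Longrightarrow> c \<cdot>\<^sub>v v \<in> W"
      using W unfolding invariant_subspace_def by auto
    fix s v assume s: "s \<in> carrier G" and v: "v \<in> W"
    have vc: "v \<in> carrier_vec d" using W v unfolding invariant_subspace_def by auto
    have "rl l s *\<^sub>v v \<in> W" using W s v unfolding invariant_subspace_def by auto
    then have "(\<chi> s ^ l) \<cdot>\<^sub>v (rl l s *\<^sub>v v) \<in> W" using W unfolding invariant_subspace_def by auto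
    moreover have "(\<chi> s ^ l) \<cdot>\<^sub>v (rl l s *\<^sub>v v) = \<rho> s *\<^sub>v v"
    proof -
      have "rl l s *\<^sub>v v = inverse (\<chi> s) ^ l \<cdot>\<^sub>v (\<rho> s *\<^sub>v v)"
        unfolding rl_def using rep_carrier[OF rep s] vc by (intro eq_vecI) (auto simp: scalar_prod_def sum_distrib_left mult.assoc)
      then show ?thesis using chi_nz s by (simp add: smult_smult_assoc power_inverse[symmetric] field_simps)
    qed
    ultimately show "\<rho> s *\<^sub>v v \<in> W" by simp
  qed
  then show "W = {0\<^sub>v d} \<or> W = carrier_vec d" using irr unfolding irr_rep_def by auto
qed

lemma rl_char: "char_of G d (rl l) = (\<lambda>s. inverse (\<chi> s) ^ l * char_of G d \<rho> s)"
  by (rule ext) (auto simp: char_of_def mat_trace_def rl_def sum_distrib_left rep_carrier[OF rep] intro!: sum.cong)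

lemma Orb_eq: "Orb \<chi> n (char_of G d \<rho>) = {char_of G d (rl l) | l. l < n}"
  unfolding Orb_def rl_char ..

lemma Orb_Irr: "Orb \<chi> n (char_of G d \<rho>) \<subseteq> Irr G"
  unfolding Orb_eq using rl_irr Irr_I by blast

lemma Orb_L1: "Orb \<chi> n (char_of G d \<rho>) \<subseteq> Lambda1 G g n"
proof
  fix \<psi> assume "\<psi> \<in> Orb \<chi> n (char_of G d \<rho>)"
  then obtain l where l: "l < n" "\<psi> = char_of G d (rl l)" unfolding Orb_eq by auto
  have "char_of G d \<rho> (g [^] n) = lam * of_nat d" by (rule char_gn[OF irr])
  moreover have "char_of G d \<rho> \<one> = of_nat d" by (rule char_one[OF rep])
  ultimately have ne: "char_of G d \<rho> (g [^] n) \<noteq> char_of G d \<rho> \<one>" using lam1 d0 by auto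
  have "\<psi> (g [^] n) = char_of G d \<rho> (g [^] n)" using l chi_gn by (simp add: rl_char)
  moreover have "\<psi> \<one> = char_of G d \<rho> \<one>" using l chi_one by (simp add: rl_char)
  ultimately have "\<psi> (g [^] n) \<noteq> \<psi> \<one>" using ne by simp
  moreover have "\<psi> \<in> Irr G" using l rl_irr Irr_I by blast
  ultimately show "\<psi> \<in> Lambda1 G g n" unfolding Lambda1_char by simp
qed

abbreviation "Orb0 \<equiv> Orb \<chi> n (char_of G d \<rho>)"

lemma finI: "finite (Irr G :: ('g \<Rightarrow> 'k) set)" by (rule finite_Irr[OF fin ac])

lemma gen_eq:
  "(\<Sum>\<psi>\<in>Lambda0 G g n. e_idem G \<psi>) + (\<Sum>\<psi>\<in>Lambda1 G g n - Orb0. e_idem G \<psi>) =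
   (\<Sum>\<psi>\<in>(Irr G :: ('g \<Rightarrow> 'k) set) - Orb0. e_idem G \<psi>)"
proof -
  have "Lambda0 G g n \<union> (Lambda1 G g n - Orb0) = (Irr G :: ('g \<Rightarrow> 'k) set) - Orb0"
    using Orb_L1 unfolding Lambda0_char Lambda1_char by auto
  moreover have "Lambda0 G g n \<inter> (Lambda1 G g n - Orb0) = {}"
    unfolding Lambda0_char Lambda1_char by auto
  moreover have "finite (Lambda0 G g n :: ('g \<Rightarrow> 'k) set)" "finite (Lambda1 G g n - Orb0)"
    using finI unfolding Lambda0_char Lambda1_char by auto
  ultimately show ?thesis by (metis sum.union_disjoint)
qed

definition E0 :: "'g \<Rightarrow> 'k" where
  "E0 s = (\<Sum>\<psi>\<in>(Irr G :: ('g \<Rightarrow> 'k) set) - Orb0. eG G \<psi> s)"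

lemma gen_val:
  "(\<Sum>\<psi>\<in>(Irr G :: ('g \<Rightarrow> 'k) set) - Orb0. e_idem G \<psi>) s m = (if s \<in> carrier G \<and> m = 0 then E0 s else 0)"
  unfolding sum_fun_app2 E0_def by (auto simp: e_idem_def eG_def)

abbreviation "Z \<equiv> P_z_act n d lam"
abbreviation "S \<equiv> P_g_act \<chi> n d \<rho>"
abbreviation "act \<equiv> P_act G \<chi> n d \<rho> lam"

lemma S_Pcar: "S s w \<in> Pcar n d" unfolding Pcar_def P_g_act_def by auto
lemma Z_Pcar: "Z w \<in> Pcar n d" unfolding Pcar_def P_z_act_def using n2 by auto
lemma Zm_Pcar: "w \<in> Pcar n d \<Longrightarrow> (Z ^^ m) w \<in> Pcar n d"
proof (cases m)
  case (Suc k)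
  then show ?thesis using Z_Pcar[of "(Z ^^ k) w"] by simp
qed simp
lemma act_Pcar: "act h w \<in> Pcar n d"
  unfolding Pcar_def P_act_def using S_Pcar unfolding Pcar_def by auto

lemma PcarD: "w \<in> Pcar n d \<Longrightarrow> n \<le> l \<or> d \<le> i \<Longrightarrow> w l i = 0"
  unfolding Pcar_def by auto

lemma Zm_formula:
  assumes w: "w \<in> Pcar n d" and m: "m \<le> n"
  shows "(Z ^^ m) w l i = (if l < n \<and> i < d then (if m \<le> l then w (l - m) i else (lam - 1) * w (l + n - m) i) else 0)"
  using m
proof (induction m arbitrary: l)
  case 0
  then show ?case using PcarD[OF w] by auto
next
  case (Suc m)
  have IH: "\<And>l. (Z ^^ m) w l i = (if l < n \<and> i < d then (if m \<le> l then w (l - m) i else (lam - 1) * w (l + n - m) i) else 0)"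
    using Suc by simp
  have "(Z ^^ Suc m) w l i = Z ((Z ^^ m) w) l i" by simp
  also have "\<dots> = (if l < n \<and> i < d then (if Suc m \<le> l then w (l - Suc m) i else (lam - 1) * w (l + n - Suc m) i) else 0)"
  proof (cases "l = 0")
    case True
    then show ?thesis using Suc.prems n2 by (auto simp: P_z_act_def IH)
  next
    case False
    then show ?thesis using Suc.prems n2 by (auto simp: P_z_act_def IH)
  qed
  finally show ?case .
qed

lemma Zn: "w \<in> Pcar n d \<Longrightarrow> (Z ^^ n) w = (\<lambda>l i. (lam - 1) * w l i)"
  by (intro ext) (auto simp: Zm_formula PcarD)

lemma S_sum: "S s (\<lambda>l i. \<Sum>j\<in>J. f j l i) = (\<lambda>l i. \<Sum>j\<in>J. S s (f j) l i)"
  unfolding P_g_act_def by (intro ext) (auto simp: sum_distrib_left intro: sum.swap)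

lemma S_smult: "S s (\<lambda>l i. c * f l i) = (\<lambda>l i. c * S s f l i)"
  unfolding P_g_act_def by (intro ext) (auto simp: sum_distrib_left mult_ac)

lemma Z_sum: "Z (\<lambda>l i. \<Sum>j\<in>J. f j l i) = (\<lambda>l i. \<Sum>j\<in>J. Z (f j) l i)"
  unfolding P_z_act_def by (intro ext) (auto simp: sum_distrib_left)

lemma Z_smult: "Z (\<lambda>l i. c * f l i) = (\<lambda>l i. c * Z f l i)"
  unfolding P_z_act_def by (intro ext) (auto simp: mult_ac)

lemma Zm_sum: "(Z ^^ m) (\<lambda>l i. \<Sum>j\<in>J. f j l i) = (\<lambda>l i. \<Sum>j\<in>J. (Z ^^ m) (f j) l i)"
  by (induction m) (simp_all add: Z_sum)

lemma Zm_smult: "(Z ^^ m) (\<lambda>l i. c * f l i) = (\<lambda>l i. c * (Z ^^ m) f l i)"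
  by (induction m) (simp_all add: Z_smult)

lemma chi_pow_inv: "t \<in> carrier G \<Longrightarrow> inverse (\<chi> t) ^ (n - 1) = \<chi> t"
proof -
  assume t: "t \<in> carrier G"
  have "\<chi> t ^ (n - 1) * \<chi> t = 1" using chi_n t n2
    by (metis Suc_diff_1 less_le_trans pos2 power_Suc2)
  then show ?thesis using chi_nz t by (metis inverse_unique mult.commute power_inverse inverse_inverse_eq)
qed

lemma ZS:
  assumes w: "w \<in> Pcar n d" and t: "t \<in> carrier G"
  shows "Z (S t w) = (\<lambda>l i. \<chi> t * S t (Z w) l i)"
proof (intro ext)
  fix l i
  have ct: "\<chi> t \<noteq> 0" using chi_nz t by auto
  show "Z (S t w) l i = \<chi> t * S t (Z w) l i"
  proof (cases "l = 0")
    case True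
    then show ?thesis using n2 chi_pow_inv[OF t]
      by (auto simp: P_z_act_def P_g_act_def sum_distrib_left mult_ac intro!: sum.cong)
  next
    case False
    then obtain l' where l': "l = Suc l'" by (cases l) auto
    have "\<chi> t * inverse (\<chi> t) ^ Suc l' = inverse (\<chi> t) ^ l'" using ct by (simp add: field_simps)
    then show ?thesis using l' n2
      by (auto simp: P_z_act_def P_g_act_def sum_distrib_left mult_ac intro!: sum.cong)
  qed
qed

lemma ZmS:
  assumes w: "w \<in> Pcar n d" and t: "t \<in> carrier G"
  shows "(Z ^^ a) (S t w) = (\<lambda>l i. \<chi> t ^ a * S t ((Z ^^ a) w) l i)"
proof (induction a)
  case 0 then show ?case by simp
next
  case (Suc a)
  have "(Z ^^ Suc a) (S t w) = Z (\<lambda>l i. \<chi> t ^ a * S t ((Z ^^ a) w) l i)" using Suc by simp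
  also have "\<dots> = (\<lambda>l i. \<chi> t ^ a * Z (S t ((Z ^^ a) w)) l i)" by (rule Z_smult)
  also have "\<dots> = (\<lambda>l i. \<chi> t ^ Suc a * S t ((Z ^^ Suc a) w) l i)"
    using ZS[OF Zm_Pcar[OF w] t] by (simp add: mult_ac)
  finally show ?case .
qed

lemma SS:
  assumes s: "s \<in> carrier G" and t: "t \<in> carrier G"
  shows "S s (S t w) = S (s \<otimes> t) w"
proof (intro ext)
  fix l i
  show "S s (S t w) l i = S (s \<otimes> t) w l i"
  proof (cases "l < n \<and> i < d")
    case True
    have "S s (S t w) l i = inverse (\<chi> s) ^ l * inverse (\<chi> t) ^ l * (\<Sum>k<d. \<Sum>k'<d. \<rho> s $$ (i, k) * \<rho> t $$ (k, k') * w l k')"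
      using True by (simp add: P_g_act_def sum_distrib_left mult_ac)
    also have "(\<Sum>k<d. \<Sum>k'<d. \<rho> s $$ (i, k) * \<rho> t $$ (k, k') * w l k') = (\<Sum>k'<d. \<rho> (s \<otimes> t) $$ (i, k') * w l k')"
      using True s t by (subst sum.swap) (simp add: rep_mult_entry[OF rep] sum_distrib_right)
    finally show ?thesis using True s t chi_mult by (simp add: P_g_act_def power_mult_distrib mult_ac)
  qed (auto simp: P_g_act_def)
qed

lemma Sg:
  assumes w: "w \<in> Pcar n d"
  shows "S (g [^] n) w = (\<lambda>l i. lam * w l i)"
proof (intro ext)
  fix l i
  have gn: "\<rho> (g [^] n) = lam \<cdot>\<^sub>m 1\<^sub>m d" by (rule scalar_of_irr[OF irr])
  show "S (g [^] n) w l i = lam * w l i"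
  proof (cases "l < n \<and> i < d")
    case True
    have "(\<Sum>k<d. \<rho> (g [^] n) $$ (i, k) * w l k) = (\<Sum>k<d. if k = i then lam * w l i else 0)"
      using True unfolding gn by (intro sum.cong) auto
    then show ?thesis using True chi_gn by (simp add: P_g_act_def chi_inv)
  qed (use PcarD[OF w] in \<open>auto simp: P_g_act_def\<close>)
qed

lemma act_sum: "act (\<lambda>u m. \<Sum>p\<in>P. f p u m) w = (\<lambda>l i. \<Sum>p\<in>P. act (f p) w l i)"
proof (intro ext)
  fix l i
  have "act (\<lambda>u m. \<Sum>p\<in>P. f p u m) w l i = (\<Sum>s\<in>carrier G. \<Sum>m<n. \<Sum>p\<in>P. f p s m * S s ((Z ^^ m) w) l i)"
    unfolding P_act_def by (simp add: sum_distrib_right)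
  also have "\<dots> = (\<Sum>s\<in>carrier G. \<Sum>p\<in>P. \<Sum>m<n. f p s m * S s ((Z ^^ m) w) l i)"
    by (intro sum.cong refl) (rule sum.swap)
  also have "\<dots> = (\<Sum>p\<in>P. \<Sum>s\<in>carrier G. \<Sum>m<n. f p s m * S s ((Z ^^ m) w) l i)"
    by (rule sum.swap)
  also have "\<dots> = (\<Sum>p\<in>P. act (f p) w l i)" unfolding P_act_def ..
  finally show "act (\<lambda>u m. \<Sum>p\<in>P. f p u m) w l i = (\<Sum>p\<in>P. act (f p) w l i)" .
qed

lemma act_smult: "act (\<lambda>u m. c * f u m) w = (\<lambda>l i. c * act f w l i)"
  unfolding P_act_def by (intro ext) (simp add: sum_distrib_left mult_ac)

lemma act_diff: "act (\<lambda>u m. f u m - f' u m) w = (\<lambda>l i. act f w l i - act f' w l i)"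
  unfolding P_act_def by (intro ext) (simp add: left_diff_distrib sum_subtractf)

lemma act_Hbasis:
  assumes v: "v \<in> carrier G" and k: "k < n"
  shows "act (Hbasis v k) w = S v ((Z ^^ k) w)"
proof (intro ext)
  fix l i
  have "act (Hbasis v k) w l i = (\<Sum>s\<in>carrier G. \<Sum>m<n. if s = v \<and> m = k then S s ((Z ^^ m) w) l i else 0)"
    unfolding P_act_def Hbasis_def by (intro sum.cong refl) simp
  also have "\<dots> = (\<Sum>s\<in>carrier G. if s = v then (\<Sum>m<n. if m = k then S s ((Z ^^ m) w) l i else 0) else 0)"
    by (intro sum.cong refl) auto
  also have "\<dots> = (\<Sum>m<n. if m = k then S v ((Z ^^ m) w) l i else 0)" using v fin by simp
  also have "\<dots> = S v ((Z ^^ k) w) l i" using k by simp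
  finally show "act (Hbasis v k) w l i = S v ((Z ^^ k) w) l i" .
qed

lemma act_HBP:
  assumes s: "s \<in> carrier G" and t: "t \<in> carrier G" and a: "a < n" and b: "b < n" and w: "w \<in> Pcar n d"
  shows "act (Hbasis_prod G \<chi> g n s a t b) w = S s ((Z ^^ a) (S t ((Z ^^ b) w)))"
proof -
  have st: "s \<otimes> t \<in> carrier G" using s t by simp
  have R: "S s ((Z ^^ a) (S t ((Z ^^ b) w))) = (\<lambda>l i. \<chi> t ^ a * S (s \<otimes> t) ((Z ^^ (a + b)) w) l i)"
    using ZmS[OF Zm_Pcar[OF w] t, of a b] by (simp add: S_smult SS[OF s t] funpow_add)
  show ?thesis
  proof (cases "a + b < n")
    case True
    then show ?thesis unfolding R Hbasis_prod_def
      by (simp add: act_smult act_Hbasis[OF st True])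
  next
    case False
    define k where "k = a + b - n"
    have k: "k < n" "a + b = k + n" using False a b unfolding k_def by auto
    have Zab: "(Z ^^ (a + b)) w = (\<lambda>l i. (lam - 1) * (Z ^^ k) w l i)"
      unfolding k(2) funpow_add using Zn[OF w] by (simp add: Zm_smult)
    have g1: "S (s \<otimes> t \<otimes> g [^] n) ((Z ^^ k) w) = (\<lambda>l i. lam * S (s \<otimes> t) ((Z ^^ k) w) l i)"
      using SS[OF st gpow_in, symmetric] Sg[OF Zm_Pcar[OF w]] by (simp add: S_smult)
    have "act (Hbasis_prod G \<chi> g n s a t b) w = (\<lambda>l i. \<chi> t ^ a * (lam * S (s \<otimes> t) ((Z ^^ k) w) l i - S (s \<otimes> t) ((Z ^^ k) w) l i))"
      using False unfolding Hbasis_prod_def k_def[symmetric]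
      using gpow_in[of n] st by (simp add: act_smult act_diff act_Hbasis[OF _ k(1)] g1)
    also have "\<dots> = S s ((Z ^^ a) (S t ((Z ^^ b) w)))"
      unfolding R Zab S_smult by (simp add: algebra_simps)
    finally show ?thesis .
  qed
qed

lemma act_Hmul:
  assumes w: "w \<in> Pcar n d"
  shows "act (Hmul G \<chi> g n x y) w = act x (act y w)"
proof -
  have L: "act (Hmul G \<chi> g n x y) w = (\<lambda>l i. \<Sum>s\<in>carrier G. \<Sum>a<n. \<Sum>t\<in>carrier G. \<Sum>b<n.
      x s a * y t b * act (Hbasis_prod G \<chi> g n s a t b) w l i)"
    unfolding Hmul_def by (simp add: act_sum act_smult)
  have R: "act x (act y w) = (\<lambda>l i. \<Sum>s\<in>carrier G. \<Sum>a<n. \<Sum>t\<in>carrier G. \<Sum>b<n.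
      x s a * y t b * S s ((Z ^^ a) (S t ((Z ^^ b) w))) l i)"
    unfolding P_act_def[of _ _ _ _ _ _ _ "P_act _ _ _ _ _ _ _ _"]
    by (simp add: P_act_def Zm_sum S_sum Zm_smult S_smult sum_distrib_left mult_ac)
  show ?thesis unfolding L R using w by (intro ext sum.cong refl) (simp add: act_HBP)
qed

abbreviation "Egen \<equiv> (\<Sum>\<psi>\<in>(Irr G :: ('g \<Rightarrow> 'k) set) - Orb0. e_idem G \<psi>)"

lemma Hmul_Hcar: "Hmul G \<chi> g n x y \<in> Hcar G n"
  unfolding Hcar_def
proof (intro CollectI allI impI)
  fix u m assume um: "u \<notin> carrier G \<or> n \<le> m"
  show "Hmul G \<chi> g n x y u m = 0"
    unfolding Hmul_def
  proof (intro sum.neutral ballI)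
    fix s a t b assume "s \<in> carrier G" "a \<in> {..<n}" "t \<in> carrier G" "b \<in> {..<n}"
    then have "Hbasis_prod G \<chi> g n s a t b u m = 0" using um gpow_in[of n]
      by (auto simp: Hbasis_prod_def Hbasis_def)
    then show "x s a * y t b * Hbasis_prod G \<chi> g n s a t b u m = 0" by simp
  qed
qed

lemma Egen_Hcar: "Egen \<in> Hcar G n"
  unfolding Hcar_def using gen_val n2 by auto

lemma act_zero_left: "act 0 w = 0"
  unfolding P_act_def by (intro ext) simp

lemma act_zero_left': "act (\<lambda>a b. 0) w = (\<lambda>a b. 0)"
  unfolding P_act_def by (intro ext) simp

lemma act_add_left: "act (x + y) w = act x w + act y w"
  unfolding P_act_def by (intro ext) (simp add: distrib_right sum.distrib)

lemma Z_zero: "(Z ^^ m) 0 = 0"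
proof (induction m)
  case (Suc m)
  then show ?case by (intro ext) (simp add: P_z_act_def)
qed simp

lemma S_zero: "S s 0 = 0"
  unfolding P_g_act_def by (intro ext) simp

lemma act_zero_right: "act h 0 = 0"
  unfolding P_act_def Z_zero S_zero by (intro ext) simp

lemma act_zero_right': "act h (\<lambda>a b. 0) = (\<lambda>a b. 0)"
  using act_zero_right by (simp add: zero_fun_def)

lemma repa_E0: assumes l: "l < n" shows "repa G d (rl l) E0 = 0\<^sub>m d d"
proof (rule eq_matI)
  fix i k assume "i < dim_row (0\<^sub>m d d :: 'k mat)" "k < dim_col (0\<^sub>m d d :: 'k mat)"
  then have i: "i < d" and k: "k < d" by auto
  have "repa G d (rl l) E0 $$ (i, k) = (\<Sum>\<psi>\<in>(Irr G :: ('g \<Rightarrow> 'k) set) - Orb0. 1 * repa G d (rl l) (eG G \<psi>) $$ (i, k))"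
    unfolding E0_def using repa_lin[OF i k, where c="\<lambda>_. 1" and f="\<lambda>\<psi>. eG G \<psi>" and \<rho>="rl l"] by simp
  also have "\<dots> = 0"
  proof (intro sum.neutral ballI)
    fix \<psi> assume \<psi>: "\<psi> \<in> (Irr G :: ('g \<Rightarrow> 'k) set) - Orb0"
    then obtain d0 and \<rho>0 :: "'g \<Rightarrow> 'k mat" where irr0: "irr_rep G d0 \<rho>0" and e: "\<psi> = char_of G d0 \<rho>0"
      by (auto elim: IrrE)
    have "\<psi> \<noteq> char_of G d (rl l)" using \<psi> l unfolding Orb_eq by auto
    then show "1 * repa G d (rl l) (eG G \<psi>) $$ (i, k) = 0"
      using i k unfolding e by (simp add: repa_e[OF fin ac irr0 rl_irr])
  qed
  finally show "repa G d (rl l) E0 $$ (i, k) = 0\<^sub>m d d $$ (i, k)" using i k by simp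
qed auto

lemma act_Egen: "act Egen w = 0"
proof (intro ext)
  fix l i
  have "act Egen w l i = (\<Sum>s\<in>carrier G. \<Sum>m<n. (if m = 0 then E0 s * S s w l i else 0))"
    unfolding P_act_def by (intro sum.cong refl) (auto simp: gen_val)
  also have "\<dots> = (\<Sum>s\<in>carrier G. E0 s * S s w l i)" using n2 by simp
  also have "\<dots> = 0"
  proof (cases "l < n \<and> i < d")
    case True
    have "(\<Sum>s\<in>carrier G. E0 s * S s w l i) = (\<Sum>s\<in>carrier G. \<Sum>k<d. E0 s * rl l s $$ (i, k) * w l k)"
      using True by (intro sum.cong refl) (simp add: P_g_act_def rl_def sum_distrib_left mult_ac)
    also have "\<dots> = (\<Sum>k<d. repa G d (rl l) E0 $$ (i, k) * w l k)"
      using True by (subst sum.swap) (simp add: repa_def sum_distrib_right)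
    also have "\<dots> = 0" using True by (simp add: repa_E0)
    finally show ?thesis .
  qed (auto simp: P_g_act_def)
  finally show "act Egen w l i = 0 l i" by simp
qed

lemma ideal_sub:
  assumes "x \<in> ideal_gen G \<chi> g n Egen"
  shows "x \<in> Hcar G n \<and> (\<forall>w\<in>Pcar n d. act x w = 0)"
  using assms
proof (induction rule: ideal_gen.induct)
  case gen
  then show ?case using Egen_Hcar act_Egen by auto
next
  case zero
  then show ?case by (auto simp: Hcar_def act_zero_left act_zero_left')
next
  case (add x y)
  have "x + y \<in> Hcar G n" using add.IH unfolding Hcar_def by auto
  moreover have "\<forall>w\<in>Pcar n d. act (x + y) w = 0" using add.IH unfolding act_add_left by (auto simp: plus_fun_def zero_fun_def)
  ultimately show ?case by blast
next
  case (lmul h x)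
  then show ?case using Hmul_Hcar act_Hmul act_zero_right act_zero_right' by auto
next
  case (rmul h x)
  then show ?case using Hmul_Hcar act_Hmul act_Pcar by auto
qed

lemma ann_rep_zero:
  assumes h: "\<forall>w\<in>Pcar n d. act h w = 0" and l: "l < n" and m: "m < n"
  shows "repa G d (rl l) (\<lambda>s. h s m) = 0\<^sub>m d d"
proof (rule mat_eq_from_vec)
  show "repa G d (rl l) (\<lambda>s. h s m) \<in> carrier_mat d d" by simp
  show "0\<^sub>m d d \<in> carrier_mat d d" by simp
  fix v :: "'k vec" assume v: "v \<in> carrier_vec d"
  define kk where "kk = (if m \<le> l then l - m else l + n - m)"
  define c where "c = (if m \<le> l then 1 else lam - 1)"
  have c0: "c \<noteq> 0" using lam1 unfolding c_def by auto
  define w where "w = (\<lambda>l' i. if l' = kk \<and> i < d then v $ i else 0)"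
  have kk: "kk < n" using l m unfolding kk_def by auto
  have w: "w \<in> Pcar n d" unfolding w_def Pcar_def using kk by auto
  have Zw: "(Z ^^ m') w l k = (if m' = m then c * v $ k else 0)" if m': "m' < n" and k: "k < d" for m' k
  proof -
    have "(Z ^^ m') w l k = (if m' \<le> l then w (l - m') k else (lam - 1) * w (l + n - m') k)"
      using Zm_formula[OF w, of m' l k] m' l k by simp
    also have "\<dots> = (if m' = m then c * v $ k else 0)"
    proof (cases "m' = m")
      case True
      then show ?thesis using l m k by (auto simp: w_def kk_def c_def)
    next
      case False
      have "\<not> (m' \<le> l \<and> l - m' = kk)" "\<not> (\<not> m' \<le> l \<and> l + n - m' = kk)"
        using False l m m' unfolding kk_def by auto
      then show ?thesis using False k by (auto simp: w_def)
    qed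
    finally show ?thesis .
  qed
  have Sterm: "S s ((Z ^^ m') w) l i = (if m' = m then c * (rl l s *\<^sub>v v) $ i else 0)"
    if s: "s \<in> carrier G" and m': "m' < n" and i: "i < d" for s m' i
  proof -
    have "S s ((Z ^^ m') w) l i = inverse (\<chi> s) ^ l * (\<Sum>k<d. \<rho> s $$ (i, k) * (if m' = m then c * v $ k else 0))"
      using l i m' Zw by (simp add: P_g_act_def)
    also have "\<dots> = (if m' = m then c * (rl l s *\<^sub>v v) $ i else 0)"
    proof (cases "m' = m")
      case True
      have "(rl l s *\<^sub>v v) $ i = (\<Sum>k<d. rl l s $$ (i, k) * v $ k)"
        using rl_rep i v s by (intro mat_vec_entry) (auto intro: rep_carrier)
      then show ?thesis using True i s by (simp add: rl_def sum_distrib_left mult_ac)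
    qed simp
    finally show ?thesis .
  qed
  show "repa G d (rl l) (\<lambda>s. h s m) *\<^sub>v v = 0\<^sub>m d d *\<^sub>v v"
  proof (rule eq_vecI)
    fix i assume "i < dim_vec (0\<^sub>m d d *\<^sub>v v)"
    then have i: "i < d" by simp
    have "act h w l i = (\<Sum>s\<in>carrier G. \<Sum>m'<n. if m' = m then h s m * (c * (rl l s *\<^sub>v v) $ i) else 0)"
      unfolding P_act_def using Sterm i by (intro sum.cong refl) auto
    also have "\<dots> = c * (\<Sum>s\<in>carrier G. h s m * (rl l s *\<^sub>v v) $ i)"
      using m by (simp add: sum_distrib_left mult_ac)
    also have "(\<Sum>s\<in>carrier G. h s m * (rl l s *\<^sub>v v) $ i) = (repa G d (rl l) (\<lambda>s. h s m) *\<^sub>v v) $ i"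
      by (rule repa_vec_entry[OF rl_rep v i, symmetric])
    finally have "act h w l i = c * (repa G d (rl l) (\<lambda>s. h s m) *\<^sub>v v) $ i" .
    moreover have "act h w l i = 0" using h w by simp
    ultimately show "(repa G d (rl l) (\<lambda>s. h s m) *\<^sub>v v) $ i = (0\<^sub>m d d *\<^sub>v v) $ i"
      using c0 i v by simp
  qed (use v in simp)
qed

lemma conv_cong_left: "(\<And>s. s \<in> carrier G \<Longrightarrow> f s = f' s) \<Longrightarrow> conv G f a u = conv G f' a u"
  unfolding conv_def by simp

lemma ann_conv:
  assumes h: "\<forall>w\<in>Pcar n d. act h w = 0" and m: "m < n" and u: "u \<in> carrier G"
  shows "h u m = conv G E0 (\<lambda>s. h s m) u"
proof -
  let ?a = "\<lambda>s. h s m"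
  let ?I = "Irr G :: ('g \<Rightarrow> 'k) set"
  have compl: "\<forall>u\<in>carrier G. (\<Sum>\<psi>\<in>?I. eG G \<psi> u) = (if u = \<one> then 1 else 0)"
    by (rule completeness[OF fin ac])
  have "h u m = conv G (\<lambda>x. if x = \<one> then 1 else 0) ?a u" by (rule conv_delta_left[OF fin u, symmetric])
  also have "\<dots> = conv G (\<lambda>x. \<Sum>\<psi>\<in>?I. eG G \<psi> x) ?a u"
    using compl by (intro conv_cong_left) auto
  also have "\<dots> = (\<Sum>\<psi>\<in>?I. conv G (eG G \<psi>) ?a u)" by (rule conv_sum_left)
  also have "\<dots> = (\<Sum>\<psi>\<in>?I - Orb0. conv G (eG G \<psi>) ?a u) + (\<Sum>\<psi>\<in>Orb0. conv G (eG G \<psi>) ?a u)"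
    using finI Orb_Irr by (metis add.commute sum.subset_diff)
  also have "(\<Sum>\<psi>\<in>Orb0. conv G (eG G \<psi>) ?a u) = 0"
  proof (intro sum.neutral ballI)
    fix \<psi> assume "\<psi> \<in> Orb0"
    then obtain l where l: "l < n" "\<psi> = char_of G d (rl l)" unfolding Orb_eq by auto
    have "conv G (eG G \<psi>) ?a u = of_nat d / of_nat (card (carrier G)) * mat_trace d (repa G d (rl l) ?a * rl l (inv u))"
      unfolding l(2) by (rule conv_e_left[OF rl_rep u])
    also have "\<dots> = 0"
    proof -
      have X: "rl l (inv u) \<in> carrier_mat d d" using rep_carrier[OF rl_rep inv_closed[OF u]] .
      have "0\<^sub>m d d * rl l (inv u) = 0\<^sub>m d d" using X by (intro eq_matI) (auto simp: scalar_prod_def)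
      then show ?thesis using ann_rep_zero[OF h l(1) m] by (simp add: mat_trace_def)
    qed
    finally show "conv G (eG G \<psi>) ?a u = 0" .
  qed
  also have "(\<Sum>\<psi>\<in>?I - Orb0. conv G (eG G \<psi>) ?a u) = conv G E0 ?a u"
    unfolding E0_def[abs_def] by (rule conv_sum_left[symmetric])
  finally show ?thesis by simp
qed

lemma Hmul_Egen:
  assumes hc: "h \<in> Hcar G n" and h: "\<forall>w\<in>Pcar n d. act h w = 0"
  shows "Hmul G \<chi> g n Egen h = h"
proof (intro ext)
  fix u m
  have inner: "(\<Sum>a<n. \<Sum>t\<in>carrier G. \<Sum>b<n. Egen s a * h t b * Hbasis_prod G \<chi> g n s a t b u m) =
      (\<Sum>t\<in>carrier G. if m < n \<and> u = s \<otimes> t then E0 s * h t m else 0)" if s: "s \<in> carrier G" for s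
  proof -
    have "(\<Sum>a<n. \<Sum>t\<in>carrier G. \<Sum>b<n. Egen s a * h t b * Hbasis_prod G \<chi> g n s a t b u m) =
      (\<Sum>a<n. if a = 0 then (\<Sum>t\<in>carrier G. \<Sum>b<n. E0 s * h t b * Hbasis_prod G \<chi> g n s 0 t b u m) else 0)"
      using s by (intro sum.cong refl) (auto simp: gen_val)
    also have "\<dots> = (\<Sum>t\<in>carrier G. \<Sum>b<n. E0 s * h t b * Hbasis_prod G \<chi> g n s 0 t b u m)"
      using n2 by simp
    also have "\<dots> = (\<Sum>t\<in>carrier G. \<Sum>b<n. if b = m \<and> u = s \<otimes> t then E0 s * h t m else 0)"
      by (intro sum.cong refl) (auto simp: Hbasis_prod_def Hbasis_def)
    also have "\<dots> = (\<Sum>t\<in>carrier G. if m < n \<and> u = s \<otimes> t then E0 s * h t m else 0)"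
      by (intro sum.cong refl) (auto simp: sum.delta)
    finally show ?thesis .
  qed
  have "Hmul G \<chi> g n Egen h u m = (\<Sum>s\<in>carrier G. \<Sum>t\<in>carrier G. if m < n \<and> u = s \<otimes> t then E0 s * h t m else 0)"
    unfolding Hmul_def using inner by (intro sum.cong refl) auto
  also have "\<dots> = h u m"
  proof (cases "m < n \<and> u \<in> carrier G")
    case True
    have "(\<Sum>s\<in>carrier G. \<Sum>t\<in>carrier G. if m < n \<and> u = s \<otimes> t then E0 s * h t m else 0) =
        (\<Sum>s\<in>carrier G. \<Sum>t\<in>carrier G. if t = inv s \<otimes> u then E0 s * h (inv s \<otimes> u) m else 0)"
    proof (intro sum.cong refl)
      fix s t assume s: "s \<in> carrier G" and t: "t \<in> carrier G"
      have "u = s \<otimes> t \<longleftrightarrow> t = inv s \<otimes> u"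
      proof
        assume "u = s \<otimes> t" then show "t = inv s \<otimes> u" using s t by (simp add: m_assoc[symmetric])
      next
        assume "t = inv s \<otimes> u" then show "u = s \<otimes> t" using s True by (simp add: m_assoc[symmetric])
      qed
      then show "(if m < n \<and> u = s \<otimes> t then E0 s * h t m else 0) = (if t = inv s \<otimes> u then E0 s * h (inv s \<otimes> u) m else 0)"
        using True by auto
    qed
    also have "\<dots> = (\<Sum>s\<in>carrier G. E0 s * h (inv s \<otimes> u) m)"
      using True fin by (intro sum.cong refl) simp
    also have "\<dots> = conv G E0 (\<lambda>s. h s m) u" unfolding conv_def ..
    also have "\<dots> = h u m" using ann_conv[OF h] True by simp
    finally show ?thesis .
  next
    case False
    then have "h u m = 0" using hc unfolding Hcar_def by auto
    moreover have "(\<Sum>s\<in>carrier G. \<Sum>t\<in>carrier G. if m < n \<and> u = s \<otimes> t then E0 s * h t m else 0) = 0"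
      using False by (intro sum.neutral ballI) auto
    ultimately show ?thesis by simp
  qed
  finally show "Hmul G \<chi> g n Egen h u m = h u m" .
qed

lemma main: "annihilator G \<chi> n d \<rho> lam = ideal_gen G \<chi> g n Egen"
proof (intro equalityI subsetI)
  fix h assume "h \<in> annihilator G \<chi> n d \<rho> lam"
  then have hc: "h \<in> Hcar G n" and h: "\<forall>w\<in>Pcar n d. act h w = 0" unfolding annihilator_def by auto
  have "Hmul G \<chi> g n Egen h \<in> ideal_gen G \<chi> g n Egen"
    by (rule ideal_gen.rmul[OF hc ideal_gen.gen])
  then show "h \<in> ideal_gen G \<chi> g n Egen" using Hmul_Egen[OF hc h] by simp
next
  fix x assume "x \<in> ideal_gen G \<chi> g n Egen"
  from ideal_sub[OF this] show "x \<in> annihilator G \<chi> n d \<rho> lam" unfolding annihilator_def by auto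
qed

end

theorem theorem4p4:
  fixes G :: "('g, 'b) monoid_scheme" and \<chi> :: "'g \<Rightarrow> 'k::field_char_0"
    and g :: 'g and n d :: nat and \<rho> :: "'g \<Rightarrow> 'k mat"
  assumes "alg_closed_field TYPE('k)"
    and "group G" and "finite (carrier G)"
    and "\<forall>s\<in>carrier G. \<chi> s \<noteq> 0"
    and "\<forall>s\<in>carrier G. \<forall>t\<in>carrier G. \<chi> (s \<otimes>\<^bsub>G\<^esub> t) = \<chi> s * \<chi> t"
    and "\<forall>s\<in>carrier G. \<chi> s ^ n = 1"
    and "g \<in> carrier G" and "\<forall>s\<in>carrier G. g \<otimes>\<^bsub>G\<^esub> s = s \<otimes>\<^bsub>G\<^esub> g"
    and "g [^]\<^bsub>G\<^esub> n \<noteq> \<one>\<^bsub>G\<^esub>"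
    and "n \<ge> 2" and "\<chi> g ^ n = 1" and "\<forall>m. 0 < m \<and> m < n \<longrightarrow> \<chi> g ^ m \<noteq> 1"
    and "irr_rep G d \<rho>" and "gn_scalar G g n d \<rho> \<noteq> 1"
  shows "annihilator G \<chi> n d \<rho> (gn_scalar G g n d \<rho>) =
         ideal_gen G \<chi> g n
           ((\<Sum>\<psi>\<in>Lambda0 G g n. e_idem G \<psi>) +
            (\<Sum>\<psi>\<in>Lambda1 G g n - Orb \<chi> n (char_of G d \<rho>). e_idem G \<psi>))"
proof -
  interpret T: thm_setup G \<chi> g n d \<rho>
    by (intro thm_setup.intro thm_setup_axioms.intro) (use assms in auto)
  show ?thesis using T.main T.gen_eq by simp
qed


end
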